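(* Let $p>1$, $\frac1p+\frac1q=1$, $\sigma\in\mathbb{R}$, and let $h\geq0$ be measurable on $(0,\infty)$ with $k^{(1)}(\sigma):=\int_0^1 h(t)t^{\sigma-1}dt\in\mathbb{R}_+=(0,\infty)$. If $f,g\geq0$ are measurable on $(0,\infty)$ with $$0<\int_0^\infty x^{p(1-\sigma)-1}f^p(x)\,dx<\infty,\qquad 0<\int_0^\infty y^{q(1-\sigma)-1}g^q(y)\,dy<\infty,$$ then the following equivalent inequalities hold: $$\int_0^\infty\left(\int_0^{1/y}h(xy)f(x)dx\right)g(y)dy=\int_0^\infty\left(\int_0^{1/x}h(xy)g(y)dy\right)f(x)dx<k^{(1)}(\sigma)\left[\int_0^\infty x^{p(1-\sigma)-1}f^p(x)dx\right]^{\frac1p}\left[\int_0^\infty y^{q(1-\sigma)-1}g^q(y)dy\right]^{\frac1q},$$ $$\int_0^\infty y^{p\sigma-1}\left(\int_0^{1/y}h(xy)f(x)\,dx\right)^pdy<(k^{(1)}(\sigma))^p\int_0^\infty x^{p(1-\sigma)-1}f^p(x)\,dx,$$ where the constant factors $k^{(1)}(\sigma)$ and $(k^{(1)}(\sigma))^p$ are the best possible.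
   Context: A constant factor $C$ in an inequality "LHS $<C\cdot$RHS" (required for all admissible $f,g$) is best possible if no positive constant $k<C$ makes the inequality valid for all admissible $f,g$. Two inequalities are equivalent if each can be derived from the other. *)

theory Defs
  imports "HOL-Analysis.Analysis"
begin

text \<open>Real power of an extended nonnegative real (intended for exponent r > 0):
  infinity stays infinity.\<close>
definition epowr :: "ennreal \<Rightarrow> real \<Rightarrow> ennreal" where
  "epowr x r = (if x = \<infinity> then \<infinity> else ennreal (enn2real x powr r))"

definition wint :: "real \<Rightarrow> real \<Rightarrow> (real \<Rightarrow> real) \<Rightarrow> ennreal" where
  "wint e \<sigma> f = (\<integral>\<^sup>+ x\<in>{0<..}. ennreal (x powr (e * (1 - \<sigma>) - 1) * f x powr e) \<partial>lborel)"

definition admissible :: "real \<Rightarrow> real \<Rightarrow> (real \<Rightarrow> real) \<Rightarrow> bool" where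
  "admissible e \<sigma> f \<longleftrightarrow> set_borel_measurable lborel {0<..} f \<and> (\<forall>x>0. 0 \<le> f x)
     \<and> 0 < wint e \<sigma> f \<and> wint e \<sigma> f < \<infinity>"

definition inner_int :: "(real \<Rightarrow> real) \<Rightarrow> (real \<Rightarrow> real) \<Rightarrow> real \<Rightarrow> ennreal" where
  "inner_int h f y = (\<integral>\<^sup>+ x\<in>{0<..<1/y}. ennreal (h (x * y) * f x) \<partial>lborel)"

definition k1 :: "(real \<Rightarrow> real) \<Rightarrow> real \<Rightarrow> ennreal" where
  "k1 h \<sigma> = (\<integral>\<^sup>+ t\<in>{0<..<1}. ennreal (h t * t powr (\<sigma> - 1)) \<partial>lborel)"

end

theory Submission
  imports Defs
begin


lemma exp_subst:
  fixes f :: "real \<Rightarrow> ennreal"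
  assumes [measurable]: "f \<in> borel_measurable borel"
  shows "(\<integral>\<^sup>+x. f x * indicator {0<..} x \<partial>lborel) = (\<integral>\<^sup>+x. f (exp x) * ennreal (exp x) \<partial>lborel)"
proof -
  have eq: "(\<integral>\<^sup>+x. f x * indicator {exp (-real (Suc n))..exp (real (Suc n))} x \<partial>lborel)
     = (\<integral>\<^sup>+x. f (exp x) * ennreal (exp x) * indicator {-real (Suc n)..real (Suc n)} x \<partial>lborel)" for n
    by (rule nn_integral_substitution_aux) (auto intro!: DERIV_exp continuous_on_exp continuous_on_id)
  have inc1: "incseq (\<lambda>n x. f x * indicator {exp (-real (Suc n))..exp (real (Suc n))} x)"
    by (intro incseq_SucI le_funI mult_left_mono) (auto simp: indicator_def, (smt (verit) exp_le_cancel_iff)+)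
  have inc2: "incseq (\<lambda>n x. f (exp x) * ennreal (exp x) * indicator {-real (Suc n)..real (Suc n)} x)"
    by (intro incseq_SucI le_funI mult_left_mono) (auto simp: indicator_def)
  have s1: "(SUP n. f x * indicator {exp (-real (Suc n))..exp (real (Suc n))} x) = f x * indicator {0<..} x" for x
  proof (cases "x > 0")
    case True
    obtain n0 :: nat where "\<bar>ln x\<bar> < real n0" using reals_Archimedean2 by blast
    then obtain n where n: "\<bar>ln x\<bar> < real (Suc n)" by (intro that[of n0]) simp
    have "x \<in> {exp (-real (Suc m))..exp (real (Suc m))}" if "m \<ge> n" for m
    proof -
      have "\<bar>ln x\<bar> < real (Suc m)" using n that by linarith
      then have "exp (-real (Suc m)) \<le> exp (ln x)" "exp (ln x) \<le> exp (real (Suc m))"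
        by (simp_all add: abs_less_iff)
      then show ?thesis using True by simp
    qed
    then have mem: "x \<in> {exp (-real (Suc n))..exp (real (Suc n))}" by simp
    have "(SUP m. f x * indicator {exp (-real (Suc m))..exp (real (Suc m))} x) = f x"
    proof (rule antisym)
      show "(SUP m. f x * indicator {exp (-real (Suc m))..exp (real (Suc m))} x) \<le> f x"
        by (rule SUP_least) (simp add: indicator_def)
      show "f x \<le> (SUP m. f x * indicator {exp (-real (Suc m))..exp (real (Suc m))} x)"
        by (rule SUP_upper2[of n]) (use mem in simp_all)
    qed
    then show ?thesis using True by simp
  next
    case False
    have "x \<notin> {exp (-real (Suc n))..exp (real (Suc n))}" for n
    proof -
      have "0 < exp (-real (Suc n))" by (rule exp_gt_zero)
      then show ?thesis using False by (simp only: atLeastAtMost_iff) linarith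
    qed
    then show ?thesis using False by simp
  qed
  have s2: "(SUP n. f (exp x) * ennreal (exp x) * indicator {-real (Suc n)..real (Suc n)} x) = f (exp x) * ennreal (exp x)" for x
  proof -
    obtain n0 :: nat where "\<bar>x\<bar> < real n0" using reals_Archimedean2 by blast
    then obtain n where n: "\<bar>x\<bar> < real (Suc n)" by (intro that[of n0]) simp
    then have mem: "x \<in> {-real (Suc n)..real (Suc n)}" by (simp add: abs_less_iff)
    show ?thesis
    proof (rule antisym)
      show "(SUP m. f (exp x) * ennreal (exp x) * indicator {-real (Suc m)..real (Suc m)} x) \<le> f (exp x) * ennreal (exp x)"
        by (rule SUP_least) (simp add: indicator_def)
      show "f (exp x) * ennreal (exp x) \<le> (SUP m. f (exp x) * ennreal (exp x) * indicator {-real (Suc m)..real (Suc m)} x)"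
        by (rule SUP_upper2[of n]) (use mem in simp_all)
    qed
  qed
  have "(\<integral>\<^sup>+x. f x * indicator {0<..} x \<partial>lborel) = (\<integral>\<^sup>+x. (SUP n. f x * indicator {exp (-real (Suc n))..exp (real (Suc n))} x) \<partial>lborel)"
    by (simp only: s1)
  also have "\<dots> = (SUP n. \<integral>\<^sup>+x. f x * indicator {exp (-real (Suc n))..exp (real (Suc n))} x \<partial>lborel)"
    by (rule nn_integral_monotone_convergence_SUP[OF inc1]) measurable
  also have "\<dots> = (SUP n. \<integral>\<^sup>+x. f (exp x) * ennreal (exp x) * indicator {-real (Suc n)..real (Suc n)} x \<partial>lborel)"
    by (rule SUP_cong[OF refl eq])
  also have "\<dots> = (\<integral>\<^sup>+x. (SUP n. f (exp x) * ennreal (exp x) * indicator {-real (Suc n)..real (Suc n)} x) \<partial>lborel)"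
    by (rule nn_integral_monotone_convergence_SUP[OF inc2, symmetric]) measurable
  also have "\<dots> = (\<integral>\<^sup>+x. f (exp x) * ennreal (exp x) \<partial>lborel)"
    by (simp only: s2)
  finally show ?thesis .
qed



lemma conj_q: fixes p q :: real assumes "p > 1" "1/p + 1/q = 1" shows "q > 1"
proof -
  have "1/q = 1 - 1/p" using assms by simp
  moreover have "0 < 1 - 1/p" "1 - 1/p < 1" using assms by (auto simp: field_simps)
  ultimately have "0 < 1/q" "1/q < 1" by auto
  then show ?thesis by (smt (verit) divide_less_eq_1 zero_less_divide_1_iff)
qed

lemma amgm_strict:
  fixes x y t :: real
  assumes "x > 0" "y > 0" "0 < t" "t < 1" "x \<noteq> y"
  shows "x powr t * y powr (1 - t) < t * x + (1 - t) * y"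
proof -
  have sx: "sqrt x > 0" "sqrt y > 0" using assms by auto
  have ne: "sqrt x \<noteq> sqrt y" using assms by auto
  have "x powr t * y powr (1 - t) = (sqrt x powr t * sqrt y powr (1 - t))^2"
  proof -
    have e1: "x powr (t/2) * x powr (t/2) = x powr t" "y powr ((1-t)/2) * y powr ((1-t)/2) = y powr (1-t)"
      by (simp_all flip: powr_add)
    have "(sqrt x powr t * sqrt y powr (1 - t))^2 = x powr (t/2) * y powr ((1 - t)/2) * (x powr (t/2) * y powr ((1 - t)/2))"
      using assms by (simp add: power_mult_distrib powr_half_sqrt[symmetric] powr_powr power2_eq_square)
    also have "\<dots> = (x powr (t/2) * x powr (t/2)) * (y powr ((1-t)/2) * y powr ((1-t)/2))" by (simp add: mult_ac)
    finally show ?thesis using e1 by simp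
  qed
  also have "\<dots> \<le> (t * sqrt x + (1 - t) * sqrt y)^2"
    using Youngs_inequality_0[of t "1 - t" "sqrt x" "sqrt y"] assms sx
    by (intro power_mono) auto
  also have "\<dots> < t * x + (1 - t) * y"
  proof -
    have "t * x + (1 - t) * y - (t * sqrt x + (1 - t) * sqrt y)^2 = t * (1 - t) * (sqrt x - sqrt y)^2"
      using assms by (simp add: power2_eq_square algebra_simps)
    moreover have "t * (1 - t) * (sqrt x - sqrt y)^2 > 0" using assms ne by simp
    ultimately show ?thesis by linarith
  qed
  finally show ?thesis .
qed

lemma young_strict:
  fixes a b p q :: real
  assumes "p > 1" "1/p + 1/q = 1" "a \<ge> 0" "b \<ge> 0" "a powr p \<noteq> b powr q"
  shows "a * b < a powr p / p + b powr q / q"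
proof -
  have q: "q > 1" using conj_q assms by blast
  show ?thesis
  proof (cases "a = 0 \<or> b = 0")
    case True
    then show ?thesis using assms q by (auto simp: powr_def split: if_splits)
  next
    case False
    then have ab: "a > 0" "b > 0" using assms by auto
    have "(a powr p) powr (1/p) * (b powr q) powr (1 - 1/p) < (1/p) * a powr p + (1 - 1/p) * b powr q"
      using amgm_strict[of "a powr p" "b powr q" "1/p"] assms ab by auto
    moreover have "1 - 1/p = 1/q" using assms by simp
    ultimately show ?thesis using ab assms q by (simp add: powr_powr)
  qed
qed



lemma nn_int_scaled:
  fixes a :: "'a \<Rightarrow> real"
  assumes [measurable]: "a \<in> borel_measurable M" and nn: "\<And>x. a x \<ge> 0"
    and IA: "(\<integral>\<^sup>+x. ennreal (a x powr p) \<partial>M) = ennreal A" and A: "A > 0" and p: "p > 0"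
  shows "(\<integral>\<^sup>+x. ennreal ((a x / A powr (1/p)) powr p / p) \<partial>M) = ennreal (1/p)"
proof -
  have "(\<integral>\<^sup>+x. ennreal ((a x / A powr (1/p)) powr p / p) \<partial>M) = (\<integral>\<^sup>+x. ennreal (1/(p*A)) * ennreal (a x powr p) \<partial>M)"
  proof (intro nn_integral_cong)
    fix x
    have "(a x / A powr (1/p)) powr p = a x powr p / A"
      using nn A p by (simp add: powr_divide powr_powr)
    then show "ennreal ((a x / A powr (1/p)) powr p / p) = ennreal (1/(p*A)) * ennreal (a x powr p)"
      using A p by (simp add: ennreal_mult[symmetric] field_simps)
  qed
  also have "\<dots> = ennreal (1/(p*A)) * ennreal A" by (subst nn_integral_cmult) (auto simp: IA)
  also have "\<dots> = ennreal (1/p)" using A p by (simp add: ennreal_mult[symmetric])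
  finally show ?thesis .
qed

lemma holder_nn:
  fixes a b :: "'a \<Rightarrow> real" and p q A B :: real
  assumes pq: "p > 1" "1/p + 1/q = 1"
    and [measurable]: "a \<in> borel_measurable M" "b \<in> borel_measurable M"
    and nna: "\<And>x. a x \<ge> 0" and nnb: "\<And>x. b x \<ge> 0"
    and IA: "(\<integral>\<^sup>+x. ennreal (a x powr p) \<partial>M) = ennreal A"
    and IB: "(\<integral>\<^sup>+x. ennreal (b x powr q) \<partial>M) = ennreal B"
    and A0: "A \<ge> 0" and B0: "B \<ge> 0"
  shows "(\<integral>\<^sup>+x. ennreal (a x * b x) \<partial>M) \<le> ennreal (A powr (1/p) * B powr (1/q))"
proof (cases "A = 0 \<or> B = 0")
  case True
  then have "AE x in M. a x * b x = 0"
  proof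
    assume "A = 0"
    then have "AE x in M. ennreal (a x powr p) = 0" using IA by (subst nn_integral_0_iff_AE[symmetric]) auto
    then show ?thesis
    proof eventually_elim
      fix x assume "ennreal (a x powr p) = 0"
      then have "a x powr p \<le> 0" by (simp add: ennreal_eq_0_iff)
      then have "a x powr p = 0" by (smt (verit) powr_ge_zero)
      then show "a x * b x = 0" by simp
    qed
  next
    assume "B = 0"
    then have "AE x in M. ennreal (b x powr q) = 0" using IB by (subst nn_integral_0_iff_AE[symmetric]) auto
    then show ?thesis
    proof eventually_elim
      fix x assume "ennreal (b x powr q) = 0"
      then have "b x powr q \<le> 0" by (simp add: ennreal_eq_0_iff)
      then have "b x powr q = 0" by (smt (verit) powr_ge_zero)
      then show "a x * b x = 0" by simp
    qed
  qed
  then have "(\<integral>\<^sup>+x. ennreal (a x * b x) \<partial>M) = 0"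
    by (subst nn_integral_0_iff_AE) (auto elim: eventually_mono)
  then show ?thesis by simp
next
  case False
  then have Apos: "A > 0" and Bpos: "B > 0" using A0 B0 by auto
  have q: "q > 1" using conj_q pq by blast
  define \<alpha> where "\<alpha> = A powr (1/p)"
  define \<beta> where "\<beta> = B powr (1/q)"
  have ab: "\<alpha> > 0" "\<beta> > 0" using Apos Bpos by (auto simp: \<alpha>_def \<beta>_def)
  have "(\<integral>\<^sup>+x. ennreal (a x * b x) \<partial>M) = (\<integral>\<^sup>+x. ennreal (\<alpha>*\<beta>) * ennreal ((a x / \<alpha>) * (b x / \<beta>)) \<partial>M)"
    using ab nna nnb by (intro nn_integral_cong) (simp add: ennreal_mult[symmetric])
  also have "\<dots> = ennreal (\<alpha>*\<beta>) * (\<integral>\<^sup>+x. ennreal ((a x / \<alpha>) * (b x / \<beta>)) \<partial>M)"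
    by (rule nn_integral_cmult) measurable
  also have "\<dots> \<le> ennreal (\<alpha>*\<beta>) * (\<integral>\<^sup>+x. ennreal ((a x / \<alpha>) powr p / p) + ennreal ((b x / \<beta>) powr q / q) \<partial>M)"
  proof (intro mult_left_mono nn_integral_mono)
    fix x
    have "(a x / \<alpha>) * (b x / \<beta>) \<le> (a x / \<alpha>) powr p / p + (b x / \<beta>) powr q / q"
      using Youngs_inequality[of p q "a x / \<alpha>" "b x / \<beta>"] pq q ab nna nnb by auto
    then show "ennreal ((a x / \<alpha>) * (b x / \<beta>)) \<le> ennreal ((a x / \<alpha>) powr p / p) + ennreal ((b x / \<beta>) powr q / q)"
      using pq q by (simp add: ennreal_plus[symmetric] ennreal_leI del: ennreal_plus)
  qed simp
  also have "(\<integral>\<^sup>+x. ennreal ((a x / \<alpha>) powr p / p) + ennreal ((b x / \<beta>) powr q / q) \<partial>M) = ennreal (1/p) + ennreal (1/q)"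
  proof -
    have e1: "(\<integral>\<^sup>+x. ennreal ((a x / \<alpha>) powr p / p) \<partial>M) = ennreal (1/p)"
      unfolding \<alpha>_def by (rule nn_int_scaled[OF _ nna IA Apos]) (use pq in auto)
    have e2: "(\<integral>\<^sup>+x. ennreal ((b x / \<beta>) powr q / q) \<partial>M) = ennreal (1/q)"
      unfolding \<beta>_def by (rule nn_int_scaled[OF _ nnb IB Bpos]) (use q in auto)
    show ?thesis by (subst nn_integral_add) (auto simp: e1 e2)
  qed
  also have "ennreal (1/p) + ennreal (1/q) = 1" using pq q by (simp add: ennreal_plus[symmetric] del: ennreal_plus)
  finally show ?thesis by (simp add: \<alpha>_def \<beta>_def)
qed



lemma AE_lborel_affine:
  fixes P :: "real \<Rightarrow> bool" and c t :: real
  assumes [measurable]: "Measurable.pred borel P" and c: "c \<noteq> 0" and AE: "AE x in lborel. P (t + c*x)"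
  shows "AE x in lborel. P x"
proof -
  have "(\<integral>\<^sup>+x. indicator {x. \<not> P x} x \<partial>lborel) = \<bar>c\<bar> * (\<integral>\<^sup>+x. indicator {x. \<not>P x} (t + c*x) \<partial>lborel)"
    by (rule nn_integral_real_affine) (auto simp: c)
  also have "(\<integral>\<^sup>+x. indicator {x. \<not>P x} (t + c*x) \<partial>lborel) = 0"
    using AE by (subst nn_integral_0_iff_AE) (auto simp: indicator_def elim!: eventually_mono)
  finally have "(\<integral>\<^sup>+x. indicator {x. \<not> P x} x \<partial>lborel) = 0" by simp
  then have "AE x in lborel. indicator {x. \<not>P x} x = (0::ennreal)" by (subst (asm) nn_integral_0_iff_AE) auto
  then show ?thesis by (auto simp: indicator_def elim!: eventually_mono)
qed

lemma periodic_zero: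
  fixes \<Phi> :: "real \<Rightarrow> ennreal" and d :: real
  assumes [measurable]: "\<Phi> \<in> borel_measurable borel" and d: "d > 0"
    and per: "AE z in lborel. \<Phi> (z + d) = \<Phi> z"
    and fin: "(\<integral>\<^sup>+z. \<Phi> z \<partial>lborel) < \<infinity>"
  shows "(\<integral>\<^sup>+z. \<Phi> z \<partial>lborel) = 0"
proof -
  define J where "J a = (\<integral>\<^sup>+z. \<Phi> z * indicator {a..<a+d} z \<partial>lborel)" for a
  have Jd: "J (a + d) = J a" for a
  proof -
    have "J (a + d) = ennreal \<bar>1::real\<bar> * (\<integral>\<^sup>+x. \<Phi> (d + 1 * x) * indicator {a+d..<a+d+d} (d + 1 * x) \<partial>lborel)"
      unfolding J_def by (rule nn_integral_real_affine) auto
    also have "\<dots> = (\<integral>\<^sup>+x. \<Phi> (x + d) * indicator {a..<a+d} x \<partial>lborel)"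
      by (simp, intro nn_integral_cong) (auto simp: indicator_def add.commute)
    also have "\<dots> = J a"
      unfolding J_def using per by (intro nn_integral_cong_AE) (auto elim!: eventually_mono)
    finally show ?thesis .
  qed
  have Jn: "J (a + real n * d) = J a" for a n
  proof (induction n)
    case (Suc n)
    have "J (a + real (Suc n) * d) = J ((a + real n * d) + d)" by (simp add: algebra_simps)
    then show ?case using Jd Suc by simp
  qed simp
  define S where "S a n = (\<integral>\<^sup>+z. \<Phi> z * indicator {a..<a + real n * d} z \<partial>lborel)" for a n
  have Sn: "S a n = of_nat n * J a" for n a
  proof (induction n arbitrary: a)
    case 0
    then show ?case by (simp add: S_def)
  next
    case (Suc n)
    have split: "\<Phi> z * indicator {a..<a + real (Suc n) * d} z
        = \<Phi> z * indicator {a..<a+d} z + \<Phi> z * indicator {a+d..<(a+d) + real n * d} z" for z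
    proof -
      have "d * real n \<ge> 0" using d by simp
      then show ?thesis using d by (auto simp: indicator_def algebra_simps) (smt (verit) d mult_nonneg_nonneg of_nat_0_le_iff)
    qed
    have "S a (Suc n) = J a + S (a + d) n"
      unfolding S_def J_def split by (rule nn_integral_add) auto
    also have "\<dots> = J a + of_nat n * J a" using Suc Jd by simp
    also have "\<dots> = of_nat (Suc n) * J a" by (simp add: algebra_simps)
    finally show ?case .
  qed
  have SN: "S (- real N * d) (2 * N) = of_nat (2 * N) * J 0" for N
    using Sn[where n="2*N" and a="- real N * d"] Jn[of "- real N * d" N] by simp
  have Sle: "S a n \<le> (\<integral>\<^sup>+z. \<Phi> z \<partial>lborel)" for a n
    unfolding S_def by (intro nn_integral_mono) (auto simp: indicator_def)
  have J0: "J 0 = 0"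
  proof (rule ccontr)
    assume ne: "J 0 \<noteq> 0"
    obtain r where r: "(\<integral>\<^sup>+z. \<Phi> z \<partial>lborel) = ennreal r" "r \<ge> 0" using fin by (cases "(\<integral>\<^sup>+z. \<Phi> z \<partial>lborel)") auto
    have "J 0 \<le> ennreal r" using SN[of 1] Sle[of "- real 1 * d" "2 * 1"] r
      by (metis le_iff_add mult_1 numeral_One of_nat_numeral one_add_one order_trans distrib_right)
    then obtain c where c: "J 0 = ennreal c" "c \<ge> 0" by (cases "J 0") (auto simp: top_unique)
    with ne have cpos: "c > 0" by (auto simp: ennreal_eq_0_iff)
    obtain N :: nat where N: "r < real N * c"
    proof -
      obtain N :: nat where "r / c < real N" using reals_Archimedean2 by blast
      then show ?thesis using cpos by (intro that[of N]) (simp add: field_simps)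
    qed
    have "ennreal (real N * c) \<le> ennreal (real (2 * N) * c)" using cpos by (intro ennreal_leI mult_right_mono) auto
    also have "\<dots> = of_nat (2 * N) * J 0" using c by (simp add: ennreal_mult ennreal_of_nat_eq_real_of_nat)
    also have "\<dots> \<le> ennreal r" using SN[of N] Sle[of "- real N * d" "2 * N"] r by simp
    finally show False using N r c by (simp add: ennreal_le_iff2)  
  qed
  have A0: "AE z in lborel. \<Phi> z * indicator {- real N * d..<- real N * d + real (2 * N) * d} z = 0" for N
    using SN[of N] J0 unfolding S_def by (subst nn_integral_0_iff_AE[symmetric]) auto
  have "AE z in lborel. \<forall>N. \<Phi> z * indicator {- real N * d..<- real N * d + real (2 * N) * d} z = 0"
    by (rule AE_all_countable[THEN iffD2]) (use A0 in blast)
  then have "AE z in lborel. \<Phi> z = 0"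
  proof (rule eventually_mono)
    fix z assume A: "\<forall>N. \<Phi> z * indicator {- real N * d..<- real N * d + real (2 * N) * d} z = 0"
    obtain N :: nat where N: "\<bar>z\<bar> / d < real N" using reals_Archimedean2 by blast
    then have "\<bar>z\<bar> < real N * d" using d by (simp add: field_simps)
    then have "z \<in> {- real N * d..<- real N * d + real (2 * N) * d}" by (auto simp: algebra_simps abs_less_iff)
    then show "\<Phi> z = 0" using A[rule_format, of N] by simp
  qed
  then show ?thesis by (subst nn_integral_0_iff_AE) auto
qed



lemma core_norm:
  fixes K F G :: "real \<Rightarrow> real" and p q k :: real
  assumes pq: "p > 1" "1/p + 1/q = 1"
    and [measurable]: "K \<in> borel_measurable borel" "F \<in> borel_measurable borel" "G \<in> borel_measurable borel"
    and nnK: "\<And>x. K x \<ge> 0" and nnF: "\<And>x. F x \<ge> 0" and nnG: "\<And>x. G x \<ge> 0"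
    and IK: "(\<integral>\<^sup>+w. ennreal (K w) \<partial>lborel) = ennreal k" and kpos: "k > 0"
    and IF: "(\<integral>\<^sup>+u. ennreal (F u powr p) \<partial>lborel) = 1"
    and IG: "(\<integral>\<^sup>+v. ennreal (G v powr q) \<partial>lborel) = 1"
  shows "(\<integral>\<^sup>+w. ennreal (K w) * (\<integral>\<^sup>+v. ennreal (F (w - v) * G v) \<partial>lborel) \<partial>lborel) < ennreal k"
proof -
  have q: "q > 1" using conj_q pq by blast
  define J where "J w = (\<integral>\<^sup>+v. ennreal (F (w - v) * G v) \<partial>lborel)" for w
  define Y where "Y w v = F (w - v) powr p / p + G v powr q / q" for w v
  have [measurable]: "J \<in> borel_measurable borel" unfolding J_def by measurable
  have IFw: "(\<integral>\<^sup>+v. ennreal (F (w - v) powr p) \<partial>lborel) = 1" for w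
    using nn_integral_real_affine[of "\<lambda>u. ennreal (F u powr p)" "-1" w] IF by simp
  have IY: "(\<integral>\<^sup>+v. ennreal (Y w v) \<partial>lborel) = 1" for w
  proof -
    have "(\<integral>\<^sup>+v. ennreal (Y w v) \<partial>lborel)
        = (\<integral>\<^sup>+v. ennreal (1/p) * ennreal (F (w - v) powr p) + ennreal (1/q) * ennreal (G v powr q) \<partial>lborel)"
      using pq q by (intro nn_integral_cong) (simp add: Y_def ennreal_mult[symmetric] ennreal_plus[symmetric] del: ennreal_plus)
    also have "\<dots> = ennreal (1/p) * 1 + ennreal (1/q) * 1"
      by (subst nn_integral_add) (auto simp: nn_integral_cmult IFw IG)
    also have "\<dots> = 1" using pq q by (simp add: ennreal_plus[symmetric] del: ennreal_plus)
    finally show ?thesis .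
  qed
  have JY: "ennreal (F (w - v) * G v) \<le> ennreal (Y w v)" for w v
    unfolding Y_def using Youngs_inequality[of p q "F (w - v)" "G v"] pq q nnF nnG by (intro ennreal_leI) auto
  have Jle: "J w \<le> 1" for w
    unfolding J_def IY[of w, symmetric] by (intro nn_integral_mono JY)
  have le: "(\<integral>\<^sup>+w. ennreal (K w) * J w \<partial>lborel) \<le> ennreal k"
    unfolding IK[symmetric] by (intro nn_integral_mono) (use Jle in \<open>auto intro: mult_left_le\<close>)
  show ?thesis unfolding J_def[symmetric]
  proof (rule ccontr)
    assume "\<not> (\<integral>\<^sup>+w. ennreal (K w) * J w \<partial>lborel) < ennreal k"
    with le have eq: "(\<integral>\<^sup>+w. ennreal (K w) * J w \<partial>lborel) = ennreal k" by auto
    have "(\<integral>\<^sup>+w. ennreal (K w) - ennreal (K w) * J w \<partial>lborel) = (\<integral>\<^sup>+w. ennreal (K w) \<partial>lborel) - (\<integral>\<^sup>+w. ennreal (K w) * J w \<partial>lborel)"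
      by (rule nn_integral_diff) (use eq Jle in \<open>auto intro!: AE_I2 mult_left_le\<close>)
    also have "\<dots> = 0" using eq IK by simp
    finally have "(\<integral>\<^sup>+w. ennreal (K w) - ennreal (K w) * J w \<partial>lborel) = 0" .
    then have "AE w in lborel. ennreal (K w) - ennreal (K w) * J w = 0"
      by (subst nn_integral_0_iff_AE[symmetric]) auto
    then have AE1: "AE w in lborel. K w > 0 \<longrightarrow> J w = 1"
    proof (rule eventually_mono, intro impI)
      fix w assume d: "ennreal (K w) - ennreal (K w) * J w = 0" and Kp: "K w > 0"
      then have "ennreal (K w) * 1 \<le> ennreal (K w) * J w" by (simp add: ennreal_minus_eq_0)
      then have "1 \<le> J w" using Kp by (subst (asm) ennreal_mult_le_mult_iff) auto
      then show "J w = 1" using Jle[of w] by auto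
    qed
    have AE2: "AE v in lborel. F (w - v) powr p = G v powr q" if Jw: "J w = 1" for w
    proof -
      have "(\<integral>\<^sup>+v. ennreal (Y w v) - ennreal (F (w - v) * G v) \<partial>lborel) = (\<integral>\<^sup>+v. ennreal (Y w v) \<partial>lborel) - (\<integral>\<^sup>+v. ennreal (F (w - v) * G v) \<partial>lborel)"
        by (rule nn_integral_diff) (use Jw JY in \<open>auto simp: J_def Y_def\<close>)
      also have "\<dots> = 0" using Jw IY[of w] by (simp add: J_def)
      finally have "(\<integral>\<^sup>+v. ennreal (Y w v) - ennreal (F (w - v) * G v) \<partial>lborel) = 0" .
      then have "AE v in lborel. ennreal (Y w v) - ennreal (F (w - v) * G v) = 0"
        by (subst nn_integral_0_iff_AE[symmetric]) (auto simp: Y_def)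
      then show ?thesis
      proof (rule eventually_mono)
        fix v assume "ennreal (Y w v) - ennreal (F (w - v) * G v) = 0"
        then have "ennreal (Y w v) \<le> ennreal (F (w - v) * G v)" by (simp add: ennreal_minus_eq_0)
        then have "Y w v \<le> F (w - v) * G v" using nnF nnG by (subst (asm) ennreal_le_iff) auto
        then show "F (w - v) powr p = G v powr q"
          using young_strict[of p q "F (w - v)" "G v"] pq nnF nnG unfolding Y_def by force
      qed
    qed
    define P where "P w \<longleftrightarrow> K w > 0 \<and> (AE v in lborel. F (w - v) powr p = G v powr q)" for w
    have AE3: "AE w in lborel. K w > 0 \<longrightarrow> P w"
      using AE1 by eventually_elim (use AE2 in \<open>auto simp: P_def\<close>)
    have "\<exists>w1 w2. w1 < w2 \<and> P w1 \<and> P w2"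
    proof (rule ccontr)
      assume no: "\<not> (\<exists>w1 w2. w1 < w2 \<and> P w1 \<and> P w2)"
      obtain w0 where w0: "\<And>w. P w \<Longrightarrow> w = w0"
      proof (cases "\<exists>w. P w")
        case True
        then obtain w0 where "P w0" by blast
        then show ?thesis using no by (intro that[of w0]) (metis linorder_neqE_linordered_idom)
      qed auto
      have "AE w in lborel. ennreal (K w) = 0"
        using AE3 AE_lborel_singleton[of w0]
      proof eventually_elim
        fix w assume "K w > 0 \<longrightarrow> P w" "w \<noteq> w0"
        then have "\<not> K w > 0" using w0 by blast
        then show "ennreal (K w) = 0" using nnK[of w] by simp
      qed
      then have "(\<integral>\<^sup>+w. ennreal (K w) \<partial>lborel) = 0" by (subst nn_integral_0_iff_AE) auto
      then show False using IK kpos by simp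
    qed
    then obtain w1 w2 where w12: "w1 < w2" "P w1" "P w2" by blast
    define \<Phi> where "\<Phi> z = ennreal (F z powr p)" for z
    have [measurable]: "\<Phi> \<in> borel_measurable borel" unfolding \<Phi>_def by measurable
    have "AE v in lborel. \<Phi> (w1 - v) = \<Phi> (w2 - v)"
      using w12(2,3) unfolding P_def \<Phi>_def by (auto elim!: eventually_elim2)
    then have "AE v in lborel. \<Phi> ((w1 + (-1) * v) + (w2 - w1)) = \<Phi> (w1 + (-1) * v)"
      by (auto elim!: eventually_mono simp: algebra_simps)
    then have per: "AE z in lborel. \<Phi> (z + (w2 - w1)) = \<Phi> z"
      by (rule AE_lborel_affine[rotated 2]) auto
    have "(\<integral>\<^sup>+z. \<Phi> z \<partial>lborel) = 0"
      by (rule periodic_zero[OF _ _ per]) (use w12 IF in \<open>auto simp: \<Phi>_def\<close>)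
    then show False using IF by (simp add: \<Phi>_def)
  qed
qed



definition pos_part_fun :: "(real \<Rightarrow> real) \<Rightarrow> real \<Rightarrow> real" where
  "pos_part_fun f x = indicator {0<..} x *\<^sub>R f x"

lemma pos_part_fun_meas:
  assumes "set_borel_measurable lborel {0<..} f"
  shows "pos_part_fun f \<in> borel_measurable borel"
  using assms unfolding set_borel_measurable_def pos_part_fun_def by simp

lemma pos_part_fun_pos[simp]: "x > 0 \<Longrightarrow> pos_part_fun f x = f x"
  by (simp add: pos_part_fun_def)

definition Kl :: "(real \<Rightarrow> real) \<Rightarrow> real \<Rightarrow> real \<Rightarrow> real" where
  "Kl h \<sigma> w = (if w < 0 then h (exp w) * exp (\<sigma> * w) else 0)"

definition Fl :: "real \<Rightarrow> (real \<Rightarrow> real) \<Rightarrow> real \<Rightarrow> real" where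
  "Fl \<sigma> f u = f (exp u) * exp ((1 - \<sigma>) * u)"

lemma Kl_meas:
  assumes "set_borel_measurable lborel {0<..} h"
  shows "Kl h \<sigma> \<in> borel_measurable borel"
proof -
  note [measurable] = pos_part_fun_meas[OF assms]
  have "Kl h \<sigma> = (\<lambda>w. if w < 0 then pos_part_fun h (exp w) * exp (\<sigma> * w) else 0)"
    by (auto simp: Kl_def fun_eq_iff)
  also have "\<dots> \<in> borel_measurable borel" by measurable
  finally show ?thesis .
qed

lemma Fl_meas:
  assumes "set_borel_measurable lborel {0<..} f"
  shows "Fl \<sigma> f \<in> borel_measurable borel"
proof -
  note [measurable] = pos_part_fun_meas[OF assms]
  have "Fl \<sigma> f = (\<lambda>u. pos_part_fun f (exp u) * exp ((1 - \<sigma>) * u))"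
    by (auto simp: Fl_def fun_eq_iff)
  also have "\<dots> \<in> borel_measurable borel" by measurable
  finally show ?thesis .
qed

lemma Kl_nonneg: "\<forall>t>0. 0 \<le> h t \<Longrightarrow> Kl h \<sigma> w \<ge> 0"
  by (auto simp: Kl_def)

lemma Fl_nonneg: "\<forall>t>0. 0 \<le> f t \<Longrightarrow> Fl \<sigma> f w \<ge> 0"
  by (auto simp: Fl_def)

definition Ip :: "(real \<Rightarrow> real) \<Rightarrow> (real \<Rightarrow> real) \<Rightarrow> real \<Rightarrow> ennreal" where
  "Ip h f y = (\<integral>\<^sup>+x. (if 0 < x \<and> x * y < 1 then ennreal (pos_part_fun h (x * y) * pos_part_fun f x) else 0) \<partial>lborel)"

lemma Ip_meas:
  assumes "set_borel_measurable lborel {0<..} h" "set_borel_measurable lborel {0<..} f"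
  shows "Ip h f \<in> borel_measurable borel"
proof -
  note [measurable] = pos_part_fun_meas[OF assms(1)] pos_part_fun_meas[OF assms(2)]
  show ?thesis unfolding Ip_def by measurable
qed

lemma Ip_eq: "y > 0 \<Longrightarrow> Ip h f y = inner_int h f y"
  unfolding Ip_def inner_int_def
  by (intro nn_integral_cong) (auto simp: indicator_def field_simps)



lemma inner_log:
  assumes hm: "set_borel_measurable lborel {0<..} h" and fm: "set_borel_measurable lborel {0<..} f"
    and hn: "\<forall>t>0. 0 \<le> h t" and fn: "\<forall>t>0. 0 \<le> f t"
  shows "Ip h f (exp v) = ennreal (exp (- (\<sigma> * v))) * (\<integral>\<^sup>+u. ennreal (Kl h \<sigma> (u+v) * Fl \<sigma> f u) \<partial>lborel)"
proof -
  note [measurable] = pos_part_fun_meas[OF hm] pos_part_fun_meas[OF fm]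
  define \<phi> where "\<phi> x = (if x * exp v < 1 then ennreal (pos_part_fun h (x * exp v) * pos_part_fun f x) else 0)" for x
  have [measurable]: "\<phi> \<in> borel_measurable borel" unfolding \<phi>_def by measurable
  have "Ip h f (exp v) = (\<integral>\<^sup>+x. \<phi> x * indicator {0<..} x \<partial>lborel)"
    unfolding Ip_def \<phi>_def by (intro nn_integral_cong) (auto simp: indicator_def)
  also have "\<dots> = (\<integral>\<^sup>+u. \<phi> (exp u) * ennreal (exp u) \<partial>lborel)"
    by (rule exp_subst) measurable
  also have "\<dots> = (\<integral>\<^sup>+u. ennreal (exp (- (\<sigma> * v))) * ennreal (Kl h \<sigma> (u+v) * Fl \<sigma> f u) \<partial>lborel)"
  proof (intro nn_integral_cong)
    fix u :: real
    have ee: "exp (- (\<sigma> * v)) * (exp (\<sigma> * (u + v)) * exp ((1 - \<sigma>) * u)) = exp u"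
      by (simp flip: exp_add add: algebra_simps)
    have lt: "exp u * exp v < 1 \<longleftrightarrow> u + v < 0" by (simp flip: exp_add)
    show "\<phi> (exp u) * ennreal (exp u) = ennreal (exp (- (\<sigma> * v))) * ennreal (Kl h \<sigma> (u+v) * Fl \<sigma> f u)"
    proof (cases "u + v < 0")
      case True
      have "ennreal (exp (- (\<sigma> * v))) * ennreal (Kl h \<sigma> (u+v) * Fl \<sigma> f u)
          = ennreal (h (exp (u+v)) * f (exp u) * (exp (- (\<sigma> * v)) * (exp (\<sigma> * (u + v)) * exp ((1 - \<sigma>) * u))))"
        using True by (simp add: Kl_def Fl_def ennreal_mult'[symmetric] mult_ac)
      also have "\<dots> = ennreal (h (exp (u+v)) * f (exp u)) * ennreal (exp u)"
        using hn fn by (simp add: ee ennreal_mult)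
      finally show ?thesis using True lt by (simp add: \<phi>_def exp_add)
    next
      case False
      then show ?thesis using lt by (simp add: \<phi>_def Kl_def)
    qed
  qed
  also have "\<dots> = ennreal (exp (- (\<sigma> * v))) * (\<integral>\<^sup>+u. ennreal (Kl h \<sigma> (u+v) * Fl \<sigma> f u) \<partial>lborel)"
    by (rule nn_integral_cmult) (use Kl_meas[OF hm] Fl_meas[OF fm] in measurable)
  finally show ?thesis .
qed

lemma T_log:
  assumes hm: "set_borel_measurable lborel {0<..} h" and fm: "set_borel_measurable lborel {0<..} f"
    and gm: "set_borel_measurable lborel {0<..} g"
    and hn: "\<forall>t>0. 0 \<le> h t" and fn: "\<forall>t>0. 0 \<le> f t" and gn: "\<forall>t>0. 0 \<le> g t"
  shows "(\<integral>\<^sup>+y\<in>{0<..}. inner_int h f y * ennreal (g y) \<partial>lborel)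
     = (\<integral>\<^sup>+v. ennreal (Fl \<sigma> g v) * (\<integral>\<^sup>+u. ennreal (Kl h \<sigma> (u+v) * Fl \<sigma> f u) \<partial>lborel) \<partial>lborel)"
proof -
  note [measurable] = pos_part_fun_meas[OF gm] Ip_meas[OF hm fm]
  have "(\<integral>\<^sup>+y\<in>{0<..}. inner_int h f y * ennreal (g y) \<partial>lborel)
      = (\<integral>\<^sup>+y. (Ip h f y * ennreal (pos_part_fun g y)) * indicator {0<..} y \<partial>lborel)"
    by (intro nn_integral_cong) (auto simp: indicator_def Ip_eq)
  also have "\<dots> = (\<integral>\<^sup>+v. (Ip h f (exp v) * ennreal (pos_part_fun g (exp v))) * ennreal (exp v) \<partial>lborel)"
    by (rule exp_subst) measurable
  also have "\<dots> = (\<integral>\<^sup>+v. ennreal (Fl \<sigma> g v) * (\<integral>\<^sup>+u. ennreal (Kl h \<sigma> (u+v) * Fl \<sigma> f u) \<partial>lborel) \<partial>lborel)"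
  proof (intro nn_integral_cong)
    fix v :: real
    have e: "exp (- (\<sigma> * v)) * g (exp v) * exp v = Fl \<sigma> g v"
      by (simp add: Fl_def mult_ac flip: exp_add) (simp add: algebra_simps)
    show "Ip h f (exp v) * ennreal (pos_part_fun g (exp v)) * ennreal (exp v) =
         ennreal (Fl \<sigma> g v) * (\<integral>\<^sup>+u. ennreal (Kl h \<sigma> (u+v) * Fl \<sigma> f u) \<partial>lborel)"
    proof -
      have g0: "g (exp v) \<ge> 0" using gn by simp
      show ?thesis unfolding inner_log[OF hm fm hn fn, where \<sigma>=\<sigma>] e[symmetric]
        by (simp add: g0 ennreal_mult mult_ac)
    qed
  qed
  finally show ?thesis .
qed

lemma wint_log:
  assumes fm: "set_borel_measurable lborel {0<..} f" and fn: "\<forall>t>0. 0 \<le> f t"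
  shows "wint e \<sigma> f = (\<integral>\<^sup>+u. ennreal (Fl \<sigma> f u powr e) \<partial>lborel)"
proof -
  note [measurable] = pos_part_fun_meas[OF fm]
  have "wint e \<sigma> f = (\<integral>\<^sup>+x. ennreal (x powr (e * (1 - \<sigma>) - 1) * pos_part_fun f x powr e) * indicator {0<..} x \<partial>lborel)"
    unfolding wint_def by (intro nn_integral_cong) (auto simp: indicator_def)
  also have "\<dots> = (\<integral>\<^sup>+u. ennreal (exp u powr (e * (1 - \<sigma>) - 1) * pos_part_fun f (exp u) powr e) * ennreal (exp u) \<partial>lborel)"
    by (rule exp_subst) measurable
  also have "\<dots> = (\<integral>\<^sup>+u. ennreal (Fl \<sigma> f u powr e) \<partial>lborel)"
  proof (intro nn_integral_cong)
    fix u :: real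
    have "exp u powr (e * (1 - \<sigma>) - 1) * f (exp u) powr e * exp u = (f (exp u) * exp ((1 - \<sigma>) * u)) powr e"
    proof -
      have e1: "exp a powr b = exp (a * b)" for a b :: real by (simp add: powr_def mult.commute)
      have "exp u powr (e * (1 - \<sigma>) - 1) * f (exp u) powr e * exp u = f (exp u) powr e * (exp (u * (e * (1 - \<sigma>) - 1)) * exp u)"
        by (simp add: e1)
      also have "\<dots> = f (exp u) powr e * exp ((1 - \<sigma>) * u * e)"
        by (simp add: exp_add[symmetric] algebra_simps)
      also have "\<dots> = (f (exp u) * exp ((1 - \<sigma>) * u)) powr e"
        using fn by (simp add: powr_mult e1)
      finally show ?thesis .
    qed
    then show "ennreal (exp u powr (e * (1 - \<sigma>) - 1) * pos_part_fun f (exp u) powr e) * ennreal (exp u) = ennreal (Fl \<sigma> f u powr e)"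
      by (simp add: Fl_def ennreal_mult[symmetric])
  qed
  finally show ?thesis .
qed

lemma k1_log:
  assumes hm: "set_borel_measurable lborel {0<..} h" and hn: "\<forall>t>0. 0 \<le> h t"
  shows "k1 h \<sigma> = (\<integral>\<^sup>+w. ennreal (Kl h \<sigma> w) \<partial>lborel)"
proof -
  note [measurable] = pos_part_fun_meas[OF hm]
  have "k1 h \<sigma> = (\<integral>\<^sup>+t. (if t < 1 then ennreal (pos_part_fun h t * t powr (\<sigma> - 1)) else 0) * indicator {0<..} t \<partial>lborel)"
    unfolding k1_def by (intro nn_integral_cong) (auto simp: indicator_def)
  also have "\<dots> = (\<integral>\<^sup>+w. (if exp w < 1 then ennreal (pos_part_fun h (exp w) * exp w powr (\<sigma> - 1)) else 0) * ennreal (exp w) \<partial>lborel)"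
    by (rule exp_subst) measurable
  also have "\<dots> = (\<integral>\<^sup>+w. ennreal (Kl h \<sigma> w) \<partial>lborel)"
  proof (intro nn_integral_cong)
    fix w :: real
    have "h (exp w) * exp w powr (\<sigma> - 1) * exp w = h (exp w) * exp (\<sigma> * w)"
      by (simp add: powr_def mult.assoc exp_add[symmetric] algebra_simps)
    then show "(if exp w < 1 then ennreal (pos_part_fun h (exp w) * exp w powr (\<sigma> - 1)) else 0) * ennreal (exp w) = ennreal (Kl h \<sigma> w)"
      using hn by (auto simp: Kl_def ennreal_mult'[symmetric] ennreal_mult[symmetric])
  qed
  finally show ?thesis .
qed

lemma epowr_mult:
  assumes "c > 0"
  shows "epowr (ennreal c * x) r = ennreal (c powr r) * epowr x r"
proof (cases x)
  case (real s)
  have cs: "ennreal c * x = ennreal (c * s)" using assms real by (simp add: ennreal_mult)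
  show ?thesis using assms real
    by (simp only: cs epowr_def) (simp add: powr_mult flip: ennreal_mult)
next
  case top
  then show ?thesis using assms by (simp add: epowr_def ennreal_mult_top)
qed

lemma P2_log:
  assumes hm: "set_borel_measurable lborel {0<..} h" and fm: "set_borel_measurable lborel {0<..} f"
    and hn: "\<forall>t>0. 0 \<le> h t" and fn: "\<forall>t>0. 0 \<le> f t"
  shows "(\<integral>\<^sup>+y\<in>{0<..}. ennreal (y powr (p * \<sigma> - 1)) * epowr (inner_int h f y) p \<partial>lborel)
     = (\<integral>\<^sup>+v. epowr (\<integral>\<^sup>+u. ennreal (Kl h \<sigma> (u+v) * Fl \<sigma> f u) \<partial>lborel) p \<partial>lborel)"
proof -
  note [measurable] = Ip_meas[OF hm fm]
  have [measurable]: "(\<lambda>y. epowr (Ip h f y) p) \<in> borel_measurable borel"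
    unfolding epowr_def by measurable
  have "(\<integral>\<^sup>+y\<in>{0<..}. ennreal (y powr (p * \<sigma> - 1)) * epowr (inner_int h f y) p \<partial>lborel)
      = (\<integral>\<^sup>+y. (ennreal (y powr (p * \<sigma> - 1)) * epowr (Ip h f y) p) * indicator {0<..} y \<partial>lborel)"
    by (intro nn_integral_cong) (auto simp: indicator_def Ip_eq)
  also have "\<dots> = (\<integral>\<^sup>+v. (ennreal (exp v powr (p * \<sigma> - 1)) * epowr (Ip h f (exp v)) p) * ennreal (exp v) \<partial>lborel)"
    by (rule exp_subst) measurable
  also have "\<dots> = (\<integral>\<^sup>+v. epowr (\<integral>\<^sup>+u. ennreal (Kl h \<sigma> (u+v) * Fl \<sigma> f u) \<partial>lborel) p \<partial>lborel)"
  proof (intro nn_integral_cong)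
    fix v :: real
    have e1: "exp a powr b = exp (a * b)" for a b :: real by (simp add: powr_def mult.commute)
    have e: "exp v powr (p * \<sigma> - 1) * exp (- (\<sigma> * v)) powr p * exp v = 1"
      by (simp add: e1 exp_add[symmetric] algebra_simps)
    show "ennreal (exp v powr (p * \<sigma> - 1)) * epowr (Ip h f (exp v)) p * ennreal (exp v) =
         epowr (\<integral>\<^sup>+u. ennreal (Kl h \<sigma> (u+v) * Fl \<sigma> f u) \<partial>lborel) p"
    proof -
      define X where "X = epowr (\<integral>\<^sup>+u. ennreal (Kl h \<sigma> (u+v) * Fl \<sigma> f u) \<partial>lborel) p"
      have "ennreal (exp v powr (p * \<sigma> - 1)) * epowr (Ip h f (exp v)) p * ennreal (exp v)
          = ennreal (exp v powr (p * \<sigma> - 1)) * (ennreal (exp (- (\<sigma> * v)) powr p) * X) * ennreal (exp v)"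
        unfolding X_def inner_log[OF hm fm hn fn, where \<sigma>=\<sigma>] epowr_mult[OF exp_gt_zero] by (rule refl)
      also have "\<dots> = (ennreal (exp v powr (p * \<sigma> - 1)) * ennreal (exp (- (\<sigma> * v)) powr p) * ennreal (exp v)) * X"
        by (metis (no_types, lifting) mult.assoc mult.commute)
      also have "\<dots> = ennreal (exp v powr (p * \<sigma> - 1) * exp (- (\<sigma> * v)) powr p * exp v) * X"
        by (simp add: ennreal_mult)
      also have "\<dots> = X" unfolding e by simp
      finally show ?thesis unfolding X_def .
    qed
  qed
  finally show ?thesis .
qed



lemma T_eq:
  fixes K F G :: "real \<Rightarrow> real"
  assumes [measurable]: "K \<in> borel_measurable borel" "F \<in> borel_measurable borel" "G \<in> borel_measurable borel"
    and nnK: "\<And>x. K x \<ge> 0" and nnF: "\<And>x. F x \<ge> 0" and nnG: "\<And>x. G x \<ge> 0"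
  shows "(\<integral>\<^sup>+v. ennreal (G v) * (\<integral>\<^sup>+u. ennreal (K (u+v) * F u) \<partial>lborel) \<partial>lborel)
       = (\<integral>\<^sup>+w. ennreal (K w) * (\<integral>\<^sup>+v. ennreal (F (w - v) * G v) \<partial>lborel) \<partial>lborel)"
proof -
  have "(\<integral>\<^sup>+v. ennreal (G v) * (\<integral>\<^sup>+u. ennreal (K (u+v) * F u) \<partial>lborel) \<partial>lborel)
      = (\<integral>\<^sup>+v. (\<integral>\<^sup>+u. ennreal (G v * (K (u+v) * F u)) \<partial>lborel) \<partial>lborel)"
  proof (rule nn_integral_cong)
    fix v
    have "ennreal (G v) * (\<integral>\<^sup>+u. ennreal (K (u+v) * F u) \<partial>lborel) = (\<integral>\<^sup>+u. ennreal (G v) * ennreal (K (u+v) * F u) \<partial>lborel)"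
      by (rule nn_integral_cmult[symmetric]) measurable
    then show "ennreal (G v) * (\<integral>\<^sup>+u. ennreal (K (u+v) * F u) \<partial>lborel) = (\<integral>\<^sup>+u. ennreal (G v * (K (u+v) * F u)) \<partial>lborel)"
      using nnG by (simp add: ennreal_mult')
  qed
  also have "\<dots> = (\<integral>\<^sup>+v. (\<integral>\<^sup>+w. ennreal (G v * (K w * F (w - v))) \<partial>lborel) \<partial>lborel)"
  proof (rule nn_integral_cong)
    fix v :: real
    show "(\<integral>\<^sup>+u. ennreal (G v * (K (u+v) * F u)) \<partial>lborel) = (\<integral>\<^sup>+w. ennreal (G v * (K w * F (w - v))) \<partial>lborel)"
      using nn_integral_real_affine[of "\<lambda>u. ennreal (G v * (K (u+v) * F u))" 1 "-v"] by simp
  qed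
  also have "\<dots> = (\<integral>\<^sup>+w. (\<integral>\<^sup>+v. ennreal (G v * (K w * F (w - v))) \<partial>lborel) \<partial>lborel)"
    by (rule lborel_pair.Fubini') measurable
  also have "\<dots> = (\<integral>\<^sup>+w. ennreal (K w) * (\<integral>\<^sup>+v. ennreal (F (w - v) * G v) \<partial>lborel) \<partial>lborel)"
  proof (rule nn_integral_cong)
    fix w
    have "ennreal (K w) * (\<integral>\<^sup>+v. ennreal (F (w - v) * G v) \<partial>lborel) = (\<integral>\<^sup>+v. ennreal (K w) * ennreal (F (w - v) * G v) \<partial>lborel)"
      by (rule nn_integral_cmult[symmetric]) measurable
    also have "\<dots> = (\<integral>\<^sup>+v. ennreal (G v * (K w * F (w - v))) \<partial>lborel)"
      by (intro nn_integral_cong) (simp add: ennreal_mult'[symmetric] nnK mult_ac)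
    finally show "(\<integral>\<^sup>+v. ennreal (G v * (K w * F (w - v))) \<partial>lborel) = ennreal (K w) * (\<integral>\<^sup>+v. ennreal (F (w - v) * G v) \<partial>lborel)" by simp
  qed
  finally show ?thesis .
qed

lemma J_swap:
  fixes F G :: "real \<Rightarrow> real"
  assumes [measurable]: "F \<in> borel_measurable borel" "G \<in> borel_measurable borel"
  shows "(\<integral>\<^sup>+v. ennreal (F (w - v) * G v) \<partial>lborel) = (\<integral>\<^sup>+v. ennreal (G (w - v) * F v) \<partial>lborel)"
  using nn_integral_real_affine[of "\<lambda>v. ennreal (F (w - v) * G v)" "-1" w] by (simp add: mult.commute)

lemma young_main:
  fixes K F G :: "real \<Rightarrow> real" and p q k A B :: real
  assumes pq: "p > 1" "1/p + 1/q = 1"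
    and [measurable]: "K \<in> borel_measurable borel" "F \<in> borel_measurable borel" "G \<in> borel_measurable borel"
    and nnK: "\<And>x. K x \<ge> 0" and nnF: "\<And>x. F x \<ge> 0" and nnG: "\<And>x. G x \<ge> 0"
    and IK: "(\<integral>\<^sup>+w. ennreal (K w) \<partial>lborel) = ennreal k" and kpos: "k > 0"
    and IF: "(\<integral>\<^sup>+u. ennreal (F u powr p) \<partial>lborel) = ennreal A" and Apos: "A > 0"
    and IG: "(\<integral>\<^sup>+v. ennreal (G v powr q) \<partial>lborel) = ennreal B" and Bpos: "B > 0"
  shows "(\<integral>\<^sup>+w. ennreal (K w) * (\<integral>\<^sup>+v. ennreal (F (w - v) * G v) \<partial>lborel) \<partial>lborel)
     < ennreal (k * A powr (1/p) * B powr (1/q))"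
proof -
  have q: "q > 1" using conj_q pq by blast
  define \<alpha> where "\<alpha> = A powr (1/p)"
  define \<beta> where "\<beta> = B powr (1/q)"
  have ab: "\<alpha> > 0" "\<beta> > 0" using Apos Bpos by (auto simp: \<alpha>_def \<beta>_def)
  define F' where "F' u = F u / \<alpha>" for u
  define G' where "G' v = G v / \<beta>" for v
  have [measurable]: "F' \<in> borel_measurable borel" "G' \<in> borel_measurable borel"
    unfolding F'_def G'_def by measurable
  have nF': "F' x \<ge> 0" "G' x \<ge> 0" for x using nnF nnG ab by (auto simp: F'_def G'_def)
  have IF': "(\<integral>\<^sup>+u. ennreal (F' u powr p) \<partial>lborel) = 1"
  proof -
    have "(\<integral>\<^sup>+u. ennreal (F' u powr p) \<partial>lborel) = (\<integral>\<^sup>+u. ennreal (1/A) * ennreal (F u powr p) \<partial>lborel)"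
    proof (rule nn_integral_cong)
      fix u
      have "F' u powr p = F u powr p / A"
        using nnF Apos pq unfolding F'_def \<alpha>_def by (simp add: powr_divide powr_powr)
      then show "ennreal (F' u powr p) = ennreal (1/A) * ennreal (F u powr p)"
        using Apos by (simp add: ennreal_mult[symmetric])
    qed
    also have "\<dots> = ennreal (1/A) * ennreal A" by (subst nn_integral_cmult) (auto simp: IF)
    also have "\<dots> = 1" using Apos by (simp flip: ennreal_mult)
    finally show ?thesis .
  qed
  have IG': "(\<integral>\<^sup>+u. ennreal (G' u powr q) \<partial>lborel) = 1"
  proof -
    have "(\<integral>\<^sup>+u. ennreal (G' u powr q) \<partial>lborel) = (\<integral>\<^sup>+u. ennreal (1/B) * ennreal (G u powr q) \<partial>lborel)"
    proof (rule nn_integral_cong)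
      fix u
      have "G' u powr q = G u powr q / B"
        using nnG Bpos q unfolding G'_def \<beta>_def by (simp add: powr_divide powr_powr)
      then show "ennreal (G' u powr q) = ennreal (1/B) * ennreal (G u powr q)"
        using Bpos by (simp add: ennreal_mult[symmetric])
    qed
    also have "\<dots> = ennreal (1/B) * ennreal B" by (subst nn_integral_cmult) (auto simp: IG)
    also have "\<dots> = 1" using Bpos by (simp flip: ennreal_mult)
    finally show ?thesis .
  qed
  have core: "(\<integral>\<^sup>+w. ennreal (K w) * (\<integral>\<^sup>+v. ennreal (F' (w - v) * G' v) \<partial>lborel) \<partial>lborel) < ennreal k"
    by (rule core_norm[OF pq _ _ _ nnK nF'(1) nF'(2) IK kpos IF' IG']) measurable
  have "(\<integral>\<^sup>+w. ennreal (K w) * (\<integral>\<^sup>+v. ennreal (F (w - v) * G v) \<partial>lborel) \<partial>lborel)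
      = (\<integral>\<^sup>+w. ennreal (\<alpha> * \<beta>) * (ennreal (K w) * (\<integral>\<^sup>+v. ennreal (F' (w - v) * G' v) \<partial>lborel)) \<partial>lborel)"
  proof (rule nn_integral_cong)
    fix w
    have "(\<integral>\<^sup>+v. ennreal (F (w - v) * G v) \<partial>lborel) = (\<integral>\<^sup>+v. ennreal (\<alpha> * \<beta>) * ennreal (F' (w - v) * G' v) \<partial>lborel)"
    proof (rule nn_integral_cong)
      fix v
      have e: "\<alpha>*\<beta> * (F' (w-v) * G' v) = F (w-v) * G v" using ab by (simp add: F'_def G'_def field_simps)
      have "ennreal (\<alpha> * \<beta>) * ennreal (F' (w - v) * G' v) = ennreal (\<alpha>*\<beta> * (F' (w-v) * G' v))"
        by (rule ennreal_mult[symmetric]) (use ab nF' in auto)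
      then show "ennreal (F (w - v) * G v) = ennreal (\<alpha> * \<beta>) * ennreal (F' (w - v) * G' v)" using e by simp
    qed
    also have "\<dots> = ennreal (\<alpha> * \<beta>) * (\<integral>\<^sup>+v. ennreal (F' (w - v) * G' v) \<partial>lborel)"
      by (rule nn_integral_cmult) measurable
    finally show "ennreal (K w) * (\<integral>\<^sup>+v. ennreal (F (w - v) * G v) \<partial>lborel)
      = ennreal (\<alpha> * \<beta>) * (ennreal (K w) * (\<integral>\<^sup>+v. ennreal (F' (w - v) * G' v) \<partial>lborel))"
      by (simp add: mult_ac)
  qed
  also have "\<dots> = ennreal (\<alpha> * \<beta>) * (\<integral>\<^sup>+w. ennreal (K w) * (\<integral>\<^sup>+v. ennreal (F' (w - v) * G' v) \<partial>lborel) \<partial>lborel)"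
    by (rule nn_integral_cmult) measurable
  also have "\<dots> < ennreal (\<alpha> * \<beta>) * ennreal k"
    by (rule ennreal_mult_strict_left_mono[OF core]) (use ab in auto)
  also have "\<dots> = ennreal (k * A powr (1/p) * B powr (1/q))"
    using ab kpos by (simp add: \<alpha>_def \<beta>_def mult_ac flip: ennreal_mult)
  finally show ?thesis .
qed



lemma part2_log:
  fixes K F :: "real \<Rightarrow> real" and p q k A :: real
  assumes pq: "p > 1" "1/p + 1/q = 1"
    and [measurable]: "K \<in> borel_measurable borel" "F \<in> borel_measurable borel"
    and nnK: "\<And>x. K x \<ge> 0" and nnF: "\<And>x. F x \<ge> 0"
    and IK: "(\<integral>\<^sup>+w. ennreal (K w) \<partial>lborel) = ennreal k" and kpos: "k > 0"
    and IF: "(\<integral>\<^sup>+u. ennreal (F u powr p) \<partial>lborel) = ennreal A" and Apos: "A > 0"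
  shows "(\<integral>\<^sup>+v. epowr (\<integral>\<^sup>+u. ennreal (K (u+v) * F u) \<partial>lborel) p \<partial>lborel) < ennreal (k powr p * A)"
proof -
  have q: "q > 1" using conj_q pq by blast
  have pq1: "(p - 1) * q = p" "p / q = p - 1" using pq q by (auto simp: field_simps)
  define H where "H v = (\<integral>\<^sup>+u. ennreal (K (u+v) * F u) \<partial>lborel)" for v
  define M where "M v = (\<integral>\<^sup>+u. ennreal (K (u+v) * F u powr p) \<partial>lborel)" for v
  have [measurable]: "H \<in> borel_measurable borel" "M \<in> borel_measurable borel"
    unfolding H_def M_def by measurable
  have IKv: "(\<integral>\<^sup>+u. ennreal (K (u+v)) \<partial>lborel) = ennreal k" for v
    using nn_integral_real_affine[of "\<lambda>u. ennreal (K u)" 1 v] IK by (simp add: add.commute)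
  have IKv2: "(\<integral>\<^sup>+v. ennreal (K (u+v)) \<partial>lborel) = ennreal k" for u
    using nn_integral_real_affine[of "\<lambda>u. ennreal (K u)" 1 u] IK by simp
  have intM: "(\<integral>\<^sup>+v. M v \<partial>lborel) = ennreal (k * A)"
  proof -
    have "(\<integral>\<^sup>+v. M v \<partial>lborel) = (\<integral>\<^sup>+u. (\<integral>\<^sup>+v. ennreal (K (u+v) * F u powr p) \<partial>lborel) \<partial>lborel)"
      unfolding M_def by (rule lborel_pair.Fubini') measurable
    also have "\<dots> = (\<integral>\<^sup>+u. ennreal (F u powr p) * ennreal k \<partial>lborel)"
    proof (rule nn_integral_cong)
      fix u
      have "(\<integral>\<^sup>+v. ennreal (K (u+v) * F u powr p) \<partial>lborel) = (\<integral>\<^sup>+v. ennreal (K (u+v)) * ennreal (F u powr p) \<partial>lborel)"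
        by (intro nn_integral_cong) (simp add: ennreal_mult nnK)
      also have "\<dots> = (\<integral>\<^sup>+v. ennreal (K (u+v)) \<partial>lborel) * ennreal (F u powr p)"
        by (rule nn_integral_multc) measurable
      finally show "(\<integral>\<^sup>+v. ennreal (K (u+v) * F u powr p) \<partial>lborel) = ennreal (F u powr p) * ennreal k"
        using IKv2[of u] by (simp add: mult.commute)
    qed
    also have "\<dots> = ennreal A * ennreal k" by (subst nn_integral_multc) (auto simp: IF)
    also have "\<dots> = ennreal (k * A)" using kpos Apos by (simp add: ennreal_mult mult.commute)
    finally show ?thesis .
  qed
  have bound: "epowr (H v) p \<le> ennreal (k powr (p - 1)) * M v" for v
  proof (cases "M v")
    case top
    then show ?thesis using kpos by (simp add: ennreal_mult_top)
  next
    case (real m)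
    define a where "a u = K (u+v) powr (1/p) * F u" for u
    define b where "b u = K (u+v) powr (1/q)" for u
    have [measurable]: "a \<in> borel_measurable borel" "b \<in> borel_measurable borel"
      unfolding a_def b_def by measurable
    have ap: "a u powr p = K (u+v) * F u powr p" for u
      using pq nnK[of "u+v"] nnF[of u] by (simp add: a_def powr_mult powr_powr powr_one)
    have bq: "b u powr q = K (u+v)" for u
      using q nnK[of "u+v"] by (simp add: b_def powr_powr powr_one)
    have ab: "a u * b u = K (u+v) * F u" for u
    proof -
      have "K (u+v) powr (1/p) * K (u+v) powr (1/q) = K (u+v)"
        using pq nnK[of "u+v"] by (simp flip: powr_add add: powr_one)
      then show ?thesis by (simp add: a_def b_def mult_ac)
    qed
    have nab: "a u \<ge> 0" "b u \<ge> 0" for u using nnF by (auto simp: a_def b_def)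
    have hol: "(\<integral>\<^sup>+u. ennreal (a u * b u) \<partial>lborel) \<le> ennreal (m powr (1/p) * k powr (1/q))"
      by (rule holder_nn[OF pq]) (use real IKv kpos nnK nnF in \<open>auto simp: ap bq M_def nab\<close>)
    then have Hle: "H v \<le> ennreal (m powr (1/p) * k powr (1/q))" unfolding H_def ab .
    then obtain hv where hv: "H v = ennreal hv" "hv \<ge> 0" "hv \<le> m powr (1/p) * k powr (1/q)"
      by (cases "H v") (auto simp: top_unique)
    have "epowr (H v) p = ennreal (hv powr p)" using hv by (simp add: epowr_def)
    also have "\<dots> \<le> ennreal ((m powr (1/p) * k powr (1/q)) powr p)"
      using hv pq by (intro ennreal_leI powr_mono2) auto
    also have "(m powr (1/p) * k powr (1/q)) powr p = k powr (p - 1) * m"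
      using real pq kpos pq1 by (simp add: powr_mult powr_powr powr_one)
    also have "ennreal (k powr (p - 1) * m) = ennreal (k powr (p - 1)) * M v"
      using real by (simp add: ennreal_mult)
    finally show ?thesis .
  qed
  define Q where "Q = (\<integral>\<^sup>+v. epowr (H v) p \<partial>lborel)"
  have [measurable]: "(\<lambda>v. epowr (H v) p) \<in> borel_measurable borel" unfolding epowr_def by measurable
  have Qle: "Q \<le> ennreal (k powr p * A)"
  proof -
    have "Q \<le> (\<integral>\<^sup>+v. ennreal (k powr (p - 1)) * M v \<partial>lborel)"
      unfolding Q_def by (intro nn_integral_mono bound)
    also have "\<dots> = ennreal (k powr (p - 1)) * ennreal (k * A)"
      by (subst nn_integral_cmult) (auto simp: intM)
    also have "\<dots> = ennreal (k powr p * A)"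
      using kpos Apos by (simp add: ennreal_mult[symmetric] powr_diff mult_ac)
    finally show ?thesis .
  qed
  have QQ: "(\<integral>\<^sup>+v. epowr (\<integral>\<^sup>+u. ennreal (K (u+v) * F u) \<partial>lborel) p \<partial>lborel) = Q"
    unfolding Q_def H_def by (rule refl)
  have main: "Q < ennreal (k powr p * A)"
  proof (cases "Q = 0")
    case True
    then show ?thesis using kpos Apos by simp
  next
    case False
    then obtain Qr where Qr: "Q = ennreal Qr" "Qr > 0"
      using Qle by (cases Q) (auto simp: top_unique ennreal_eq_0_iff)
    have finH: "AE v in lborel. H v \<noteq> \<infinity>"
    proof -
      have "AE v in lborel. epowr (H v) p \<noteq> \<infinity>"
        by (rule nn_integral_PInf_AE) (use Qr in \<open>auto simp: Q_def\<close>)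
      then show ?thesis by eventually_elim (auto simp: epowr_def)
    qed
    define G where "G v = enn2real (H v) powr (p - 1)" for v
    have [measurable]: "G \<in> borel_measurable borel" unfolding G_def by measurable
    have nnG: "G v \<ge> 0" for v by (simp add: G_def)
    have IG: "(\<integral>\<^sup>+v. ennreal (G v powr q) \<partial>lborel) = ennreal Qr"
      unfolding Qr(1)[symmetric] Q_def
    proof (rule nn_integral_cong_AE)
      show "AE v in lborel. ennreal (G v powr q) = epowr (H v) p"
        using finH by eventually_elim (auto simp: G_def epowr_def powr_powr pq1)
    qed
    have T: "(\<integral>\<^sup>+v. ennreal (G v) * H v \<partial>lborel) = ennreal Qr"
      unfolding Qr(1)[symmetric] Q_def
    proof (rule nn_integral_cong_AE)
      show "AE v in lborel. ennreal (G v) * H v = epowr (H v) p"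
        using finH
      proof eventually_elim
        fix v assume "H v \<noteq> \<infinity>"
        then obtain h where h: "H v = ennreal h" "h \<ge> 0" by (cases "H v") auto
        have "h powr (p - 1) * h = h powr p"
        proof (cases "h = 0")
          case False
          have "h powr p = h powr ((p - 1) + 1)" by simp
          also have "\<dots> = h powr (p - 1) * h powr 1" by (rule powr_add)
          also have "\<dots> = h powr (p - 1) * h" using h by simp
          finally show ?thesis by simp
        qed simp
        then show "ennreal (G v) * H v = epowr (H v) p"
          using h by (simp add: G_def epowr_def ennreal_mult[symmetric])
      qed
    qed
    have "(\<integral>\<^sup>+v. ennreal (G v) * H v \<partial>lborel)
        = (\<integral>\<^sup>+w. ennreal (K w) * (\<integral>\<^sup>+v. ennreal (F (w - v) * G v) \<partial>lborel) \<partial>lborel)"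
      unfolding H_def by (rule T_eq) (auto simp: nnK nnF nnG)
    also have "\<dots> < ennreal (k * A powr (1/p) * Qr powr (1/q))"
      by (rule young_main[OF pq _ _ _ nnK nnF nnG IK kpos IF Apos IG Qr(2)]) measurable
    finally have lt: "Qr < k * A powr (1/p) * Qr powr (1/q)"
      using T kpos Apos Qr by (simp add: ennreal_less_iff)
    have "Qr = Qr powr (1/p) * Qr powr (1/q)" using Qr pq by (simp flip: powr_add add: powr_one)
    with lt have "Qr powr (1/p) * Qr powr (1/q) < (k * A powr (1/p)) * Qr powr (1/q)" by (simp add: mult_ac)
    then have "Qr powr (1/p) < k * A powr (1/p)" using Qr by (simp add: mult_less_cancel_right)
    then have "(Qr powr (1/p)) powr p < (k * A powr (1/p)) powr p"
      using pq by (intro powr_less_mono2) auto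
    then have "Qr < k powr p * A"
      using pq Qr kpos Apos by (simp add: powr_powr powr_mult powr_one)
    then show ?thesis using Qr by (simp add: ennreal_less_iff)
  qed
  then show ?thesis unfolding QQ .
qed



lemma int_exp_neg:
  fixes a :: real assumes "a > 0"
  shows "(\<integral>\<^sup>+v. ennreal (exp (- a * v)) * indicator {0..} v \<partial>lborel) = ennreal (1/a)"
  using nn_integral_has_integral_lebesgue'[OF _ has_integral_exp_minus_to_infinity[OF assms, of 0]] by simp

lemma int_exp_pos:
  fixes a :: real assumes "a > 0"
  shows "(\<integral>\<^sup>+u. ennreal (exp (a * u)) * indicator {..0} u \<partial>lborel) = ennreal (1/a)"
proof -
  have "(\<integral>\<^sup>+u. ennreal (exp (a * u)) * indicator {..0} u \<partial>lborel)
      = ennreal \<bar>-1::real\<bar> * (\<integral>\<^sup>+v. ennreal (exp (a * (0 + (-1) * v))) * indicator {..0} (0 + (-1) * v) \<partial>lborel)"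
    by (rule nn_integral_real_affine) auto
  also have "\<dots> = (\<integral>\<^sup>+v. ennreal (exp (- a * v)) * indicator {0..} v \<partial>lborel)"
    by (simp, intro nn_integral_cong) (auto simp: indicator_def)
  also have "\<dots> = ennreal (1/a)" by (rule int_exp_neg[OF assms])
  finally show ?thesis .
qed

definition fe :: "real \<Rightarrow> real \<Rightarrow> real \<Rightarrow> real \<Rightarrow> real" where
  "fe \<sigma> p \<epsilon> x = (if 0 < x \<and> x \<le> 1 then x powr (\<sigma> - 1 + \<epsilon>/p) else 0)"

definition ge :: "real \<Rightarrow> real \<Rightarrow> real \<Rightarrow> real \<Rightarrow> real" where
  "ge \<sigma> q \<epsilon> y = (if 1 \<le> y then y powr (\<sigma> - 1 - \<epsilon>/q) else 0)"

lemma Fl_fe: "Fl \<sigma> (fe \<sigma> p \<epsilon>) u = (if u \<le> 0 then exp (\<epsilon>/p * u) else 0)"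
proof -
  have e1: "exp a powr b = exp (a * b)" for a b :: real by (simp add: powr_def mult.commute)
  show ?thesis
    by (auto simp: Fl_def fe_def e1 exp_add[symmetric] algebra_simps)
qed

lemma Fl_ge: "Fl \<sigma> (ge \<sigma> q \<epsilon>) v = (if 0 \<le> v then exp (- (\<epsilon>/q) * v) else 0)"
proof -
  have e1: "exp a powr b = exp (a * b)" for a b :: real by (simp add: powr_def mult.commute)
  show ?thesis
    by (auto simp: Fl_def ge_def e1 exp_add[symmetric] algebra_simps)
qed

lemma fe_meas: "set_borel_measurable lborel {0<..} (fe \<sigma> p \<epsilon>)"
  unfolding set_borel_measurable_def fe_def by measurable

lemma ge_meas: "set_borel_measurable lborel {0<..} (ge \<sigma> q \<epsilon>)"
  unfolding set_borel_measurable_def ge_def by measurable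

lemma fe_nonneg: "\<forall>t>0. 0 \<le> fe \<sigma> p \<epsilon> t" by (simp add: fe_def)
lemma ge_nonneg: "\<forall>t>0. 0 \<le> ge \<sigma> q \<epsilon> t" by (simp add: ge_def)

lemma wint_fe:
  assumes "p > 0" "\<epsilon> > 0"
  shows "wint p \<sigma> (fe \<sigma> p \<epsilon>) = ennreal (1/\<epsilon>)"
proof -
  have "wint p \<sigma> (fe \<sigma> p \<epsilon>) = (\<integral>\<^sup>+u. ennreal (Fl \<sigma> (fe \<sigma> p \<epsilon>) u powr p) \<partial>lborel)"
    by (rule wint_log[OF fe_meas fe_nonneg])
  also have "\<dots> = (\<integral>\<^sup>+u. ennreal (exp (\<epsilon> * u)) * indicator {..0} u \<partial>lborel)"
  proof (rule nn_integral_cong)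
    fix u :: real
    have e1: "exp a powr b = exp (a * b)" for a b :: real by (simp add: powr_def mult.commute)
    show "ennreal (Fl \<sigma> (fe \<sigma> p \<epsilon>) u powr p) = ennreal (exp (\<epsilon> * u)) * indicator {..0} u"
      using assms by (auto simp: Fl_fe e1 indicator_def)
  qed
  also have "\<dots> = ennreal (1/\<epsilon>)" by (rule int_exp_pos[OF assms(2)])
  finally show ?thesis .
qed

lemma wint_ge:
  assumes "q > 0" "\<epsilon> > 0"
  shows "wint q \<sigma> (ge \<sigma> q \<epsilon>) = ennreal (1/\<epsilon>)"
proof -
  have "wint q \<sigma> (ge \<sigma> q \<epsilon>) = (\<integral>\<^sup>+u. ennreal (Fl \<sigma> (ge \<sigma> q \<epsilon>) u powr q) \<partial>lborel)"
    by (rule wint_log[OF ge_meas ge_nonneg])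
  also have "\<dots> = (\<integral>\<^sup>+u. ennreal (exp (- \<epsilon> * u)) * indicator {0..} u \<partial>lborel)"
  proof (rule nn_integral_cong)
    fix u :: real
    have e1: "exp a powr b = exp (a * b)" for a b :: real by (simp add: powr_def mult.commute)
    show "ennreal (Fl \<sigma> (ge \<sigma> q \<epsilon>) u powr q) = ennreal (exp (- \<epsilon> * u)) * indicator {0..} u"
      using assms by (auto simp: Fl_ge e1 indicator_def)
  qed
  also have "\<dots> = ennreal (1/\<epsilon>)" by (rule int_exp_neg[OF assms(2)])
  finally show ?thesis .
qed

lemma admissible_fe:
  assumes "p > 0" "\<epsilon> > 0"
  shows "admissible p \<sigma> (fe \<sigma> p \<epsilon>)"
  using assms unfolding admissible_def by (simp add: wint_fe fe_meas fe_nonneg)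

lemma admissible_ge:
  assumes "q > 0" "\<epsilon> > 0"
  shows "admissible q \<sigma> (ge \<sigma> q \<epsilon>)"
  using assms unfolding admissible_def by (simp add: wint_ge ge_meas ge_nonneg)



definition ke :: "(real \<Rightarrow> real) \<Rightarrow> real \<Rightarrow> real \<Rightarrow> real \<Rightarrow> ennreal" where
  "ke h \<sigma> p \<epsilon> = (\<integral>\<^sup>+w. ennreal (Kl h \<sigma> w * exp (\<epsilon>/p * w)) \<partial>lborel)"

lemma inner_fe:
  assumes hm: "set_borel_measurable lborel {0<..} h" and hn: "\<forall>t>0. 0 \<le> h t" and v: "v \<ge> 0"
  shows "(\<integral>\<^sup>+u. ennreal (Kl h \<sigma> (u+v) * Fl \<sigma> (fe \<sigma> p \<epsilon>) u) \<partial>lborel) = ennreal (exp (- (\<epsilon>/p) * v)) * ke h \<sigma> p \<epsilon>"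
proof -
  note [measurable] = Kl_meas[OF hm] Fl_meas[OF fe_meas]
  have "(\<integral>\<^sup>+u. ennreal (Kl h \<sigma> (u+v) * Fl \<sigma> (fe \<sigma> p \<epsilon>) u) \<partial>lborel)
      = ennreal \<bar>1::real\<bar> * (\<integral>\<^sup>+w. ennreal (Kl h \<sigma> ((-v + 1 * w)+v) * Fl \<sigma> (fe \<sigma> p \<epsilon>) (-v + 1 * w)) \<partial>lborel)"
    by (rule nn_integral_real_affine) auto
  also have "\<dots> = (\<integral>\<^sup>+w. ennreal (exp (- (\<epsilon>/p) * v)) * ennreal (Kl h \<sigma> w * exp (\<epsilon>/p * w)) \<partial>lborel)"
  proof (simp only: abs_one ennreal_1 mult_1, rule nn_integral_cong)
    fix w :: real
    show "ennreal (Kl h \<sigma> ((-v + w)+v) * Fl \<sigma> (fe \<sigma> p \<epsilon>) (-v + w)) = ennreal (exp (- (\<epsilon>/p) * v)) * ennreal (Kl h \<sigma> w * exp (\<epsilon>/p * w))"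
    proof (cases "w < 0")
      case True
      have c: "-v + w \<le> 0" using True v by simp
      have ex: "exp (\<epsilon>/p * (-v + w)) = exp (- (\<epsilon>/p) * v) * exp (\<epsilon>/p * w)"
        by (simp add: exp_add[symmetric] ring_distribs)
      have "Fl \<sigma> (fe \<sigma> p \<epsilon>) (-v + w) = exp (- (\<epsilon>/p) * v) * exp (\<epsilon>/p * w)"
        by (simp only: Fl_fe c if_True ex)
      then have E: "Kl h \<sigma> ((-v + w)+v) * Fl \<sigma> (fe \<sigma> p \<epsilon>) (-v + w) = exp (- (\<epsilon>/p) * v) * (Kl h \<sigma> w * exp (\<epsilon>/p * w))"
        by simp
      show ?thesis unfolding E by (rule ennreal_mult') simp
    next
      case False
      then show ?thesis by (simp add: Kl_def)
    qed
  qed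
  also have "\<dots> = ennreal (exp (- (\<epsilon>/p) * v)) * ke h \<sigma> p \<epsilon>"
    unfolding ke_def by (rule nn_integral_cmult) measurable
  finally show ?thesis .
qed

lemma T_fe_ge:
  assumes hm: "set_borel_measurable lborel {0<..} h" and hn: "\<forall>t>0. 0 \<le> h t"
    and pq: "p > 1" "1/p + 1/q = 1" and e: "\<epsilon> > 0"
  shows "(\<integral>\<^sup>+y\<in>{0<..}. inner_int h (fe \<sigma> p \<epsilon>) y * ennreal (ge \<sigma> q \<epsilon> y) \<partial>lborel) = ennreal (1/\<epsilon>) * ke h \<sigma> p \<epsilon>"
proof -
  note [measurable] = Kl_meas[OF hm] Fl_meas[OF fe_meas]
  have "(\<integral>\<^sup>+y\<in>{0<..}. inner_int h (fe \<sigma> p \<epsilon>) y * ennreal (ge \<sigma> q \<epsilon> y) \<partial>lborel)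
     = (\<integral>\<^sup>+v. ennreal (Fl \<sigma> (ge \<sigma> q \<epsilon>) v) * (\<integral>\<^sup>+u. ennreal (Kl h \<sigma> (u+v) * Fl \<sigma> (fe \<sigma> p \<epsilon>) u) \<partial>lborel) \<partial>lborel)"
    by (rule T_log[OF hm fe_meas ge_meas hn fe_nonneg ge_nonneg])
  also have "\<dots> = (\<integral>\<^sup>+v. (ennreal (exp (- \<epsilon> * v)) * indicator {0..} v) * ke h \<sigma> p \<epsilon> \<partial>lborel)"
  proof (rule nn_integral_cong)
    fix v :: real
    show "ennreal (Fl \<sigma> (ge \<sigma> q \<epsilon>) v) * (\<integral>\<^sup>+u. ennreal (Kl h \<sigma> (u+v) * Fl \<sigma> (fe \<sigma> p \<epsilon>) u) \<partial>lborel)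
        = (ennreal (exp (- \<epsilon> * v)) * indicator {0..} v) * ke h \<sigma> p \<epsilon>"
    proof (cases "v \<ge> 0")
      case True
      have ee: "exp (- (\<epsilon>/q) * v) * exp (- (\<epsilon>/p) * v) = exp (- \<epsilon> * v)"
      proof -
        have "- (\<epsilon>/q) * v + - (\<epsilon>/p) * v = - \<epsilon> * v * (1/p + 1/q)" by (simp add: field_simps)
        then show ?thesis using pq by (simp flip: exp_add)
      qed
      have A: "Fl \<sigma> (ge \<sigma> q \<epsilon>) v = exp (- (\<epsilon>/q) * v)" using True by (simp add: Fl_ge)
      have "ennreal (Fl \<sigma> (ge \<sigma> q \<epsilon>) v) * (\<integral>\<^sup>+u. ennreal (Kl h \<sigma> (u+v) * Fl \<sigma> (fe \<sigma> p \<epsilon>) u) \<partial>lborel)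
          = ennreal (exp (- (\<epsilon>/q) * v)) * (ennreal (exp (- (\<epsilon>/p) * v)) * ke h \<sigma> p \<epsilon>)"
        by (simp only: A inner_fe[OF hm hn True])
      also have "\<dots> = ennreal (exp (- (\<epsilon>/q) * v) * exp (- (\<epsilon>/p) * v)) * ke h \<sigma> p \<epsilon>"
        by (simp add: ennreal_mult' mult.assoc)
      also have "\<dots> = ennreal (exp (- \<epsilon> * v)) * ke h \<sigma> p \<epsilon>" by (simp only: ee)
      also have "\<dots> = (ennreal (exp (- \<epsilon> * v)) * indicator {0..} v) * ke h \<sigma> p \<epsilon>" using True by simp
      finally show ?thesis .
    next
      case False
      then show ?thesis by (simp add: Fl_ge)
    qed
  qed
  also have "\<dots> = (\<integral>\<^sup>+v. ennreal (exp (- \<epsilon> * v)) * indicator {0..} v \<partial>lborel) * ke h \<sigma> p \<epsilon>"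
    by (rule nn_integral_multc) measurable
  also have "\<dots> = ennreal (1/\<epsilon>) * ke h \<sigma> p \<epsilon>" using int_exp_neg[OF e] by simp
  finally show ?thesis .
qed

lemma P2_fe:
  assumes hm: "set_borel_measurable lborel {0<..} h" and hn: "\<forall>t>0. 0 \<le> h t"
    and p: "p > 0" and e: "\<epsilon> > 0"
  shows "ennreal (1/\<epsilon>) * epowr (ke h \<sigma> p \<epsilon>) p \<le>
      (\<integral>\<^sup>+y\<in>{0<..}. ennreal (y powr (p * \<sigma> - 1)) * epowr (inner_int h (fe \<sigma> p \<epsilon>) y) p \<partial>lborel)"
proof -
  note [measurable] = Kl_meas[OF hm] Fl_meas[OF fe_meas]
  have "ennreal (1/\<epsilon>) * epowr (ke h \<sigma> p \<epsilon>) p = (\<integral>\<^sup>+v. ennreal (exp (- \<epsilon> * v)) * indicator {0..} v \<partial>lborel) * epowr (ke h \<sigma> p \<epsilon>) p"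
    using int_exp_neg[OF e] by simp
  also have "\<dots> = (\<integral>\<^sup>+v. (ennreal (exp (- \<epsilon> * v)) * indicator {0..} v) * epowr (ke h \<sigma> p \<epsilon>) p \<partial>lborel)"
    by (rule nn_integral_multc[symmetric]) measurable
  also have "\<dots> \<le> (\<integral>\<^sup>+v. epowr (\<integral>\<^sup>+u. ennreal (Kl h \<sigma> (u+v) * Fl \<sigma> (fe \<sigma> p \<epsilon>) u) \<partial>lborel) p \<partial>lborel)"
  proof (rule nn_integral_mono)
    fix v :: real
    show "(ennreal (exp (- \<epsilon> * v)) * indicator {0..} v) * epowr (ke h \<sigma> p \<epsilon>) p
       \<le> epowr (\<integral>\<^sup>+u. ennreal (Kl h \<sigma> (u+v) * Fl \<sigma> (fe \<sigma> p \<epsilon>) u) \<partial>lborel) p"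
    proof (cases "v \<ge> 0")
      case True
      have e1: "exp a powr b = exp (a * b)" for a b :: real by (simp add: powr_def mult.commute)
      have "exp (- (\<epsilon> / p) * v) powr p = exp (- \<epsilon> * v)" using p by (simp add: e1)
      then show ?thesis using True
        by (simp add: inner_fe[OF hm hn True] epowr_mult)
    qed simp
  qed
  also have "\<dots> = (\<integral>\<^sup>+y\<in>{0<..}. ennreal (y powr (p * \<sigma> - 1)) * epowr (inner_int h (fe \<sigma> p \<epsilon>) y) p \<partial>lborel)"
    by (rule P2_log[OF hm fe_meas hn fe_nonneg, symmetric])
  finally show ?thesis .
qed

lemma ke_SUP:
  assumes hm: "set_borel_measurable lborel {0<..} h" and hn: "\<forall>t>0. 0 \<le> h t" and p: "p > 0"
  shows "(SUP n. ke h \<sigma> p (1 / real (Suc n))) = k1 h \<sigma>"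
proof -
  note [measurable] = Kl_meas[OF hm]
  define X where "X n w = ennreal (Kl h \<sigma> w * exp ((1 / real (Suc n))/p * w))" for n w
  have inc: "incseq X"
  proof (intro incseq_SucI le_funI)
    fix n w
    show "X n w \<le> X (Suc n) w"
    proof (cases "w < 0")
      case True
      have "(1 / real (Suc n))/p * w \<le> (1 / real (Suc (Suc n)))/p * w"
        using True p by (intro mult_right_mono_neg divide_right_mono) (auto simp: field_simps)
      then show ?thesis unfolding X_def using Kl_nonneg[OF hn]
        by (intro ennreal_leI mult_left_mono) auto
    qed (simp add: X_def Kl_def)
  qed
  have lim: "(SUP n. X n w) = ennreal (Kl h \<sigma> w)" for w
  proof (rule SUP_Lim[OF _ ])
    show "incseq (\<lambda>n. X n w)" using inc by (auto simp: incseq_def le_fun_def)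
    have "(\<lambda>n. inverse (real (Suc n)) * (w / p)) \<longlonglongrightarrow> 0 * (w / p)"
      by (intro tendsto_mult LIMSEQ_inverse_real_of_nat tendsto_const)
    then have "(\<lambda>n. (1 / real (Suc n))/p * w) \<longlonglongrightarrow> 0"
      by (simp add: field_simps)
    then have "(\<lambda>n. Kl h \<sigma> w * exp ((1 / real (Suc n))/p * w)) \<longlonglongrightarrow> Kl h \<sigma> w * exp 0"
      by (intro tendsto_mult tendsto_exp tendsto_const)
    then show "(\<lambda>n. X n w) \<longlonglongrightarrow> ennreal (Kl h \<sigma> w)"
      unfolding X_def by (intro tendsto_ennrealI) simp
  qed
  have "(SUP n. ke h \<sigma> p (1 / real (Suc n))) = (SUP n. integral\<^sup>N lborel (X n))"
    unfolding ke_def X_def by simp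
  also have "\<dots> = (\<integral>\<^sup>+w. (SUP n. X n w) \<partial>lborel)"
    by (rule nn_integral_monotone_convergence_SUP[symmetric, OF inc]) (unfold X_def, measurable)
  also have "\<dots> = k1 h \<sigma>" by (simp add: lim k1_log[OF hm hn])
  finally show ?thesis .
qed



theorem corollary4:
  fixes p q \<sigma> :: real and h :: "real \<Rightarrow> real"
  assumes "p > 1" and "1 / p + 1 / q = 1"
    and "set_borel_measurable lborel {0<..} h" and "\<forall>t>0. 0 \<le> h t"
    and "0 < k1 h \<sigma>" and "k1 h \<sigma> < \<infinity>"
  shows
    "(\<forall>f g. admissible p \<sigma> f \<and> admissible q \<sigma> g \<longrightarrow>
        (\<integral>\<^sup>+ y\<in>{0<..}. inner_int h f y * ennreal (g y) \<partial>lborel)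
          = (\<integral>\<^sup>+ x\<in>{0<..}. inner_int h g x * ennreal (f x) \<partial>lborel)
      \<and> (\<integral>\<^sup>+ y\<in>{0<..}. inner_int h f y * ennreal (g y) \<partial>lborel)
          < ennreal (enn2real (k1 h \<sigma>) * enn2real (wint p \<sigma> f) powr (1 / p)
                      * enn2real (wint q \<sigma> g) powr (1 / q)))
   \<and> (\<forall>f. admissible p \<sigma> f \<longrightarrow>
        (\<integral>\<^sup>+ y\<in>{0<..}. ennreal (y powr (p * \<sigma> - 1)) * epowr (inner_int h f y) p \<partial>lborel)
          < ennreal (enn2real (k1 h \<sigma>) powr p * enn2real (wint p \<sigma> f)))
   \<and> (\<forall>k. 0 < k \<and> k < enn2real (k1 h \<sigma>) \<longrightarrow>
        (\<exists>f g. admissible p \<sigma> f \<and> admissible q \<sigma> g \<and>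
          \<not> ((\<integral>\<^sup>+ y\<in>{0<..}. inner_int h f y * ennreal (g y) \<partial>lborel)
               < ennreal (k * enn2real (wint p \<sigma> f) powr (1 / p)
                            * enn2real (wint q \<sigma> g) powr (1 / q)))))
   \<and> (\<forall>k. 0 < k \<and> k < enn2real (k1 h \<sigma>) powr p \<longrightarrow>
        (\<exists>f. admissible p \<sigma> f \<and>
          \<not> ((\<integral>\<^sup>+ y\<in>{0<..}. ennreal (y powr (p * \<sigma> - 1)) * epowr (inner_int h f y) p \<partial>lborel)
               < ennreal (k * enn2real (wint p \<sigma> f)))))"

proof -
  note pq = assms(1,2)
  note hm = assms(3) and hn = assms(4)
  have q: "q > 1" using conj_q pq by blast
  have p0: "p > 0" and q0: "q > 0" using pq q by auto
  define k where "k = enn2real (k1 h \<sigma>)"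
  have k1k: "k1 h \<sigma> = ennreal k" using assms(6) by (simp add: k_def ennreal_enn2real_if)
  have kpos: "k > 0" using assms(5) k1k by (simp add: ennreal_eq_0_iff)
  have IK: "(\<integral>\<^sup>+w. ennreal (Kl h \<sigma> w) \<partial>lborel) = ennreal k"
    using k1_log[OF hm hn] k1k by simp
  note Km[measurable] = Kl_meas[OF hm]
  have nnK: "\<And>x. Kl h \<sigma> x \<ge> 0" using Kl_nonneg[OF hn] by blast
  have wint_real: "\<exists>A. wint e \<sigma> f = ennreal A \<and> A > 0 \<and> A = enn2real (wint e \<sigma> f)" if "admissible e \<sigma> f" for e f
  proof -
    have "0 < wint e \<sigma> f" "wint e \<sigma> f < \<infinity>" using that by (auto simp: admissible_def)
    then show ?thesis by (cases "wint e \<sigma> f") (auto simp: ennreal_eq_0_iff)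
  qed
  have P1: "(\<integral>\<^sup>+ y\<in>{0<..}. inner_int h f y * ennreal (g y) \<partial>lborel)
          = (\<integral>\<^sup>+ x\<in>{0<..}. inner_int h g x * ennreal (f x) \<partial>lborel)
      \<and> (\<integral>\<^sup>+ y\<in>{0<..}. inner_int h f y * ennreal (g y) \<partial>lborel)
          < ennreal (enn2real (k1 h \<sigma>) * enn2real (wint p \<sigma> f) powr (1 / p)
                      * enn2real (wint q \<sigma> g) powr (1 / q))"
    if af: "admissible p \<sigma> f" and ag: "admissible q \<sigma> g" for f g
  proof -
    have fm: "set_borel_measurable lborel {0<..} f" and fn: "\<forall>t>0. 0 \<le> f t"
      using af by (auto simp: admissible_def)
    have gm: "set_borel_measurable lborel {0<..} g" and gn: "\<forall>t>0. 0 \<le> g t"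
      using ag by (auto simp: admissible_def)
    obtain A where A: "wint p \<sigma> f = ennreal A" "A > 0" "A = enn2real (wint p \<sigma> f)" using wint_real[OF af] by blast
    obtain B where B: "wint q \<sigma> g = ennreal B" "B > 0" "B = enn2real (wint q \<sigma> g)" using wint_real[OF ag] by blast
    note Fm[measurable] = Fl_meas[OF fm] Fl_meas[OF gm]
    have nnF: "\<And>x. Fl \<sigma> f x \<ge> 0" using Fl_nonneg[OF fn] by blast
    have nnG: "\<And>x. Fl \<sigma> g x \<ge> 0" using Fl_nonneg[OF gn] by blast
    have IF: "(\<integral>\<^sup>+u. ennreal (Fl \<sigma> f u powr p) \<partial>lborel) = ennreal A" using wint_log[OF fm fn] A by simp
    have IG: "(\<integral>\<^sup>+u. ennreal (Fl \<sigma> g u powr q) \<partial>lborel) = ennreal B" using wint_log[OF gm gn] B by simp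
    have L: "(\<integral>\<^sup>+ y\<in>{0<..}. inner_int h f y * ennreal (g y) \<partial>lborel)
        = (\<integral>\<^sup>+w. ennreal (Kl h \<sigma> w) * (\<integral>\<^sup>+v. ennreal (Fl \<sigma> f (w - v) * Fl \<sigma> g v) \<partial>lborel) \<partial>lborel)"
      unfolding T_log[OF hm fm gm hn fn gn, where \<sigma>=\<sigma>] by (rule T_eq) (auto simp: nnK nnF nnG)
    have R: "(\<integral>\<^sup>+ x\<in>{0<..}. inner_int h g x * ennreal (f x) \<partial>lborel)
        = (\<integral>\<^sup>+w. ennreal (Kl h \<sigma> w) * (\<integral>\<^sup>+v. ennreal (Fl \<sigma> g (w - v) * Fl \<sigma> f v) \<partial>lborel) \<partial>lborel)"
      unfolding T_log[OF hm gm fm hn gn fn, where \<sigma>=\<sigma>] by (rule T_eq) (auto simp: nnK nnF nnG)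
    have eq: "(\<integral>\<^sup>+w. ennreal (Kl h \<sigma> w) * (\<integral>\<^sup>+v. ennreal (Fl \<sigma> f (w - v) * Fl \<sigma> g v) \<partial>lborel) \<partial>lborel)
        = (\<integral>\<^sup>+w. ennreal (Kl h \<sigma> w) * (\<integral>\<^sup>+v. ennreal (Fl \<sigma> g (w - v) * Fl \<sigma> f v) \<partial>lborel) \<partial>lborel)"
      by (intro nn_integral_cong arg_cong2[where f="(*)"] refl J_swap) measurable
    have lt: "(\<integral>\<^sup>+w. ennreal (Kl h \<sigma> w) * (\<integral>\<^sup>+v. ennreal (Fl \<sigma> f (w - v) * Fl \<sigma> g v) \<partial>lborel) \<partial>lborel)
        < ennreal (k * A powr (1/p) * B powr (1/q))"
      by (rule young_main[OF pq _ _ _ nnK nnF nnG IK kpos IF A(2) IG B(2)]) measurable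
    show ?thesis using L R eq lt A(3) B(3) by (simp add: k_def)
  qed
  have P2: "(\<integral>\<^sup>+ y\<in>{0<..}. ennreal (y powr (p * \<sigma> - 1)) * epowr (inner_int h f y) p \<partial>lborel)
          < ennreal (enn2real (k1 h \<sigma>) powr p * enn2real (wint p \<sigma> f))"
    if af: "admissible p \<sigma> f" for f
  proof -
    have fm: "set_borel_measurable lborel {0<..} f" and fn: "\<forall>t>0. 0 \<le> f t"
      using af by (auto simp: admissible_def)
    obtain A where A: "wint p \<sigma> f = ennreal A" "A > 0" "A = enn2real (wint p \<sigma> f)" using wint_real[OF af] by blast
    note Fm[measurable] = Fl_meas[OF fm]
    have nnF: "\<And>x. Fl \<sigma> f x \<ge> 0" using Fl_nonneg[OF fn] by blast
    have IF: "(\<integral>\<^sup>+u. ennreal (Fl \<sigma> f u powr p) \<partial>lborel) = ennreal A" using wint_log[OF fm fn] A by simp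
    have "(\<integral>\<^sup>+v. epowr (\<integral>\<^sup>+u. ennreal (Kl h \<sigma> (u+v) * Fl \<sigma> f u) \<partial>lborel) p \<partial>lborel) < ennreal (k powr p * A)"
      by (rule part2_log[OF pq _ _ nnK nnF IK kpos IF A(2)]) measurable
    then show ?thesis using P2_log[OF hm fm hn fn, where p=p and \<sigma>=\<sigma>] A(3) by (simp add: k_def)
  qed
  have SUPk: "(SUP n. ke h \<sigma> p (1 / real (Suc n))) = ennreal k"
    using ke_SUP[OF hm hn p0] k1k by simp
  have P3: "\<exists>f g. admissible p \<sigma> f \<and> admissible q \<sigma> g \<and>
          \<not> ((\<integral>\<^sup>+ y\<in>{0<..}. inner_int h f y * ennreal (g y) \<partial>lborel)
               < ennreal (k' * enn2real (wint p \<sigma> f) powr (1 / p)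
                            * enn2real (wint q \<sigma> g) powr (1 / q)))"
    if k': "0 < k'" "k' < enn2real (k1 h \<sigma>)" for k'
  proof -
    have "ennreal k' < (SUP n. ke h \<sigma> p (1 / real (Suc n)))"
      using k' SUPk by (simp add: k_def ennreal_less_iff)
    then obtain n where n: "ennreal k' < ke h \<sigma> p (1 / real (Suc n))" by (auto simp: less_SUP_iff)
    define \<epsilon> where "\<epsilon> = 1 / real (Suc n)"
    have e: "\<epsilon> > 0" by (simp add: \<epsilon>_def)
    have w1: "enn2real (wint p \<sigma> (fe \<sigma> p \<epsilon>)) = 1/\<epsilon>" using wint_fe[OF p0 e] e by simp
    have w2: "enn2real (wint q \<sigma> (ge \<sigma> q \<epsilon>)) = 1/\<epsilon>" using wint_ge[OF q0 e] e by simp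
    have pw: "(1/\<epsilon>) powr (1/p) * (1/\<epsilon>) powr (1/q) = 1/\<epsilon>"
      using pq e by (simp flip: powr_add)
    have "ennreal (k' * enn2real (wint p \<sigma> (fe \<sigma> p \<epsilon>)) powr (1 / p) * enn2real (wint q \<sigma> (ge \<sigma> q \<epsilon>)) powr (1 / q))
        = ennreal (1/\<epsilon>) * ennreal k'"
    proof -
      have r: "k' * enn2real (wint p \<sigma> (fe \<sigma> p \<epsilon>)) powr (1 / p) * enn2real (wint q \<sigma> (ge \<sigma> q \<epsilon>)) powr (1 / q) = (1/\<epsilon>) * k'"
        unfolding w1 w2 using pw by (metis mult.assoc mult.commute)
      show ?thesis unfolding r using k' e by (intro ennreal_mult) auto
    qed
    also have "\<dots> \<le> ennreal (1/\<epsilon>) * ke h \<sigma> p \<epsilon>"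
      using n by (intro mult_left_mono) (auto simp: \<epsilon>_def)
    also have "\<dots> = (\<integral>\<^sup>+ y\<in>{0<..}. inner_int h (fe \<sigma> p \<epsilon>) y * ennreal (ge \<sigma> q \<epsilon> y) \<partial>lborel)"
      by (rule T_fe_ge[OF hm hn pq e, symmetric])
    finally show ?thesis using admissible_fe[OF p0 e] admissible_ge[OF q0 e] by (intro exI[of _ "fe \<sigma> p \<epsilon>"] exI[of _ "ge \<sigma> q \<epsilon>"]) (simp add: not_less)
  qed
  have P4: "\<exists>f. admissible p \<sigma> f \<and>
          \<not> ((\<integral>\<^sup>+ y\<in>{0<..}. ennreal (y powr (p * \<sigma> - 1)) * epowr (inner_int h f y) p \<partial>lborel)
               < ennreal (k' * enn2real (wint p \<sigma> f)))"
    if k': "0 < k'" "k' < enn2real (k1 h \<sigma>) powr p" for k'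
  proof -
    define c where "c = k' powr (1/p)"
    have c0: "c > 0" using k' by (simp add: c_def)
    have "c < (k powr p) powr (1/p)" unfolding c_def using k' p0 by (intro powr_less_mono2) (auto simp: k_def)
    then have ck: "c < k" using p0 kpos by (simp add: powr_powr)
    have "ennreal c < (SUP n. ke h \<sigma> p (1 / real (Suc n)))"
      using ck c0 SUPk by (simp add: ennreal_less_iff)
    then obtain n where n: "ennreal c < ke h \<sigma> p (1 / real (Suc n))" by (auto simp: less_SUP_iff)
    define \<epsilon> where "\<epsilon> = 1 / real (Suc n)"
    have e: "\<epsilon> > 0" by (simp add: \<epsilon>_def)
    have "ke h \<sigma> p \<epsilon> \<le> ennreal k" unfolding SUPk[symmetric] \<epsilon>_def by (rule SUP_upper) simp
    then obtain r where r: "ke h \<sigma> p \<epsilon> = ennreal r" "r \<ge> 0" by (cases "ke h \<sigma> p \<epsilon>") (auto simp: top_unique)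
    have cr: "c < r" using n r c0 by (simp add: \<epsilon>_def ennreal_less_iff)
    have "k' = c powr p" using k' p0 by (simp add: c_def powr_powr)
    also have "\<dots> \<le> r powr p" using cr c0 p0 by (intro powr_mono2) auto
    finally have kr: "k' \<le> r powr p" .
    have w1: "enn2real (wint p \<sigma> (fe \<sigma> p \<epsilon>)) = 1/\<epsilon>" using wint_fe[OF p0 e] e by simp
    have "ennreal (k' * enn2real (wint p \<sigma> (fe \<sigma> p \<epsilon>))) = ennreal (1/\<epsilon>) * ennreal k'"
    proof -
      have "k' * enn2real (wint p \<sigma> (fe \<sigma> p \<epsilon>)) = (1/\<epsilon>) * k'" unfolding w1 by simp
      then show ?thesis using k' e by (simp only:) (intro ennreal_mult, auto)
    qed
    also have "\<dots> \<le> ennreal (1/\<epsilon>) * epowr (ke h \<sigma> p \<epsilon>) p"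
      using kr r by (intro mult_left_mono) (auto simp: epowr_def)
    also have "\<dots> \<le> (\<integral>\<^sup>+ y\<in>{0<..}. ennreal (y powr (p * \<sigma> - 1)) * epowr (inner_int h (fe \<sigma> p \<epsilon>) y) p \<partial>lborel)"
      by (rule P2_fe[OF hm hn p0 e])
    finally show ?thesis using admissible_fe[OF p0 e] by (intro exI[of _ "fe \<sigma> p \<epsilon>"]) (simp add: not_less)
  qed
  show ?thesis using P1 P2 P3 P4 by blast
qed



end
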